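(* Let $\{\omega_n:n\in\mathbb{N}_0\}$ and $\{\tilde\omega_n:n\in\mathbb{N}_0\}$ be the biorthogonal wavelet packets (defined in the context) associated with a pair of biorthogonal scaling functions $\omega_0=\varphi$ and $\tilde\omega_0=\tilde\varphi$. Then $$\langle\omega_{qr+s_1}(\cdot),\tilde\omega_{qr+s_2}(\cdot-u(k))\rangle=\delta_{0,k}\,\delta_{s_1,s_2}\quad\text{for all }0\le s_1,s_2\le q-1,\ r,k\in\mathbb{N}_0.$$
   Context: $K$ is a local field of positive characteristic $p$ with ring of integers $\mathfrak{D}=\{|x|\le1\}$, prime ideal $\mathfrak{B}=\mathfrak{p}\mathfrak{D}$ ($\mathfrak{p}$ a prime element), $q=|\mathfrak{D}/\mathfrak{B}|=p^c$, Haar measure normalized with $\mathfrak{D}$ of measure $1$. Choose $\zeta_0=1,\zeta_1,\dots,\zeta_{c-1}\in\mathfrak{D}$ with $|\zeta_j|=1$ whose images form a basis of $\mathfrak{D}/\mathfrak{B}\cong GF(q)$ over $GF(p)$; for $0\le n<q$, $n=a_0+a_1p+\dots+a_{c-1}p^{c-1}$ ($0\le a_k<p$), put $u(n)=(a_0+a_1\zeta_1+\dots+a_{c-1}\zeta_{c-1})\mathfrak{p}^{-1}$, and for $n=b_0+b_1q+\dots+b_sq^s$ ($0\le b_k<q$), $u(n)=u(b_0)+u(b_1)\mathfrak{p}^{-1}+\dots+u(b_s)\mathfrak{p}^{-s}$. $\chi$ is a character of $(K,+)$ trivial on $\mathfrak{D}$, non-trivial on $\mathfrak{B}^{-1}$,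 $\chi_k(x)=\chi(u(k)x)$; $\hat f(\xi)=\int_Kf(x)\overline{\chi(\xi x)}dx$. Let $\varphi,\tilde\varphi\in L^2(K)$ and $\psi_\ell,\tilde\psi_\ell\in L^2(K)$ ($1\le\ell\le q-1$) satisfy $\varphi(x)=\sqrt q\sum_{k\in\mathbb{N}_0}a_k^0\varphi(\mathfrak{p}^{-1}x-u(k))$, $\psi_\ell(x)=\sqrt q\sum_ka_k^\ell\varphi(\mathfrak{p}^{-1}x-u(k))$, and the same with tildes (coefficients $\tilde a_k^s$), all coefficient sequences in $\ell^2(\mathbb{N}_0)$; masks $m_s(\xi)=\frac1{\sqrt q}\sum_ka_k^s\overline{\chi_k(\xi)}$, $\tilde m_s$ analogously ($0\le s\le q-1$). $\varphi$ is the scaling function of a multiresolution analysis of $L^2(K)$ and $\{\psi_\ell(\cdot-u(k))\}$ is a Riesz basis of a direct complement $W_0$ of $V_0$ in $V_1$. Biorthogonality: for all $k\in\mathbb{N}_0$, $1\le\ell,\ell'\le q-1$: $\langle\varphi,\tilde\varphi(\cdot-u(k))\rangle=\delta_{0,k}$, $\langle\varphi,\tilde\psi_\ell(\cdot-u(k))\rangle=0$, $\langle\tilde\varphi,\psi_\ell(\cdot-u(k))\rangle=0$, $\langle\psi_\ell,\tilde\psi_{\ell'}(\cdot-u(k))\rangle=\delta_{\ell,\ell'}\delta_{0,k}$. Wavelet packets: $\omega_0=\varphi$, $\tilde\omega_0=\tilde\varphi$, and for $n=qr+s$ with $r\in\mathbb{N}_0$, $0\le s\le q-1$: $\omega_n(x)=\sqrt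 q\sum_{k\in\mathbb{N}_0}a_k^s\omega_r(\mathfrak{p}^{-1}x-u(k))$, $\tilde\omega_n(x)=\sqrt q\sum_k\tilde a_k^s\tilde\omega_r(\mathfrak{p}^{-1}x-u(k))$. *)

theory Defs
  imports "HOL-Analysis.Analysis"
begin

definition ring_int :: "('k::field \<Rightarrow> real) \<Rightarrow> 'k set" where
  "ring_int absv = {x. absv x \<le> 1}"

definition prime_ideal :: "('k::field \<Rightarrow> real) \<Rightarrow> 'k set" where
  "prime_ideal absv = {x. absv x < 1}"

definition residue_classes :: "('k::field \<Rightarrow> real) \<Rightarrow> 'k set set" where
  "residue_classes absv =
     (\<lambda>x. {y \<in> ring_int absv. x - y \<in> prime_ideal absv}) ` ring_int absv"

definition local_field_pc ::
  "('k::field \<Rightarrow> real) \<Rightarrow> 'k measure \<Rightarrow> nat \<Rightarrow> nat \<Rightarrow> 'k \<Rightarrow> bool" where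
  "local_field_pc absv \<mu> p c pr \<longleftrightarrow>
     prime p \<and> CHAR('k) = p \<and> c \<ge> 1 \<and>
     (\<forall>x. absv x \<ge> 0) \<and> (\<forall>x. absv x = 0 \<longleftrightarrow> x = 0) \<and>
     (\<forall>x y. absv (x * y) = absv x * absv y) \<and>
     (\<forall>x y. absv (x + y) \<le> max (absv x) (absv y)) \<and>
     (\<forall>x. x \<noteq> 0 \<longrightarrow> (\<exists>n::int. absv x = real (p ^ c) powr real_of_int n)) \<and>
     absv pr = 1 / real (p ^ c) \<and>
     (\<forall>X::nat \<Rightarrow> 'k. (\<forall>e>0. \<exists>N. \<forall>m\<ge>N. \<forall>n\<ge>N. absv (X m - X n) < e) \<longrightarrow>
        (\<exists>L. \<forall>e>0. \<exists>N. \<forall>n\<ge>N. absv (X n - L) < e)) \<and>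
     finite (residue_classes absv) \<and> card (residue_classes absv) = p ^ c \<and>
     sets \<mu> = sigma_sets UNIV {{x. absv (x - a) \<le> r} | a r. True} \<and>
     (\<forall>a. (\<lambda>x. x + a) \<in> measurable \<mu> \<mu> \<and> distr \<mu> \<mu> (\<lambda>x. x + a) = \<mu>) \<and>
     emeasure \<mu> (ring_int absv) = 1"

definition residue_basis ::
  "('k::field \<Rightarrow> real) \<Rightarrow> nat \<Rightarrow> nat \<Rightarrow> (nat \<Rightarrow> 'k) \<Rightarrow> bool" where
  "residue_basis absv p c \<zeta> \<longleftrightarrow>
     \<zeta> 0 = 1 \<and> (\<forall>j<c. absv (\<zeta> j) = 1) \<and>
     (\<forall>x \<in> ring_int absv. \<exists>!a. a \<in> {..<c} \<rightarrow>\<^sub>E {..<p} \<and>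
        x - (\<Sum>j<c. of_nat (a j) * \<zeta> j) \<in> prime_ideal absv)"

definition u_digit :: "nat \<Rightarrow> nat \<Rightarrow> (nat \<Rightarrow> 'k::field) \<Rightarrow> 'k \<Rightarrow> nat \<Rightarrow> 'k" where
  "u_digit p c \<zeta> pr n = (\<Sum>j<c. of_nat (n div p ^ j mod p) * \<zeta> j) * inverse pr"

text \<open>u(n) for general n = b_0 + b_1 q + ... + b_s q^s: u(b_0) + u(b_1) pr^-1 + ... ;
  the digits with index i > n vanish, so summing up to n covers all digits.\<close>

definition u_pt :: "nat \<Rightarrow> nat \<Rightarrow> (nat \<Rightarrow> 'k::field) \<Rightarrow> 'k \<Rightarrow> nat \<Rightarrow> 'k" where
  "u_pt p c \<zeta> pr n =
     (\<Sum>i\<le>n. u_digit p c \<zeta> pr (n div (p ^ c) ^ i mod p ^ c) * inverse pr ^ i)"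

definition L2 :: "'k measure \<Rightarrow> ('k \<Rightarrow> complex) \<Rightarrow> bool" where
  "L2 \<mu> f \<longleftrightarrow> f \<in> borel_measurable \<mu> \<and> integrable \<mu> (\<lambda>x. (cmod (f x))\<^sup>2)"

definition l2_inner :: "'k measure \<Rightarrow> ('k \<Rightarrow> complex) \<Rightarrow> ('k \<Rightarrow> complex) \<Rightarrow> complex" where
  "l2_inner \<mu> f g = integral\<^sup>L \<mu> (\<lambda>x. f x * cnj (g x))"

definition l2_norm :: "'k measure \<Rightarrow> ('k \<Rightarrow> complex) \<Rightarrow> real" where
  "l2_norm \<mu> f = sqrt (integral\<^sup>L \<mu> (\<lambda>x. (cmod (f x))\<^sup>2))"

definition L2_limit :: "'k measure \<Rightarrow> (nat \<Rightarrow> 'k \<Rightarrow> complex) \<Rightarrow> ('k \<Rightarrow> complex) \<Rightarrow> bool" where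
  "L2_limit \<mu> S f \<longleftrightarrow> L2 \<mu> f \<and> (\<forall>N. L2 \<mu> (S N)) \<and>
     (\<lambda>N. l2_norm \<mu> (\<lambda>x. f x - S N x)) \<longlonglongrightarrow> 0"

text \<open>Closed subspace of L^2(K) (a set of functions closed under a.e.-equality).\<close>

definition closed_subspace :: "'k measure \<Rightarrow> ('k \<Rightarrow> complex) set \<Rightarrow> bool" where
  "closed_subspace \<mu> V \<longleftrightarrow>
     (\<forall>f\<in>V. L2 \<mu> f) \<and> (\<lambda>x. 0) \<in> V \<and>
     (\<forall>f\<in>V. \<forall>g\<in>V. (\<lambda>x. f x + g x) \<in> V) \<and>
     (\<forall>f\<in>V. \<forall>a. (\<lambda>x. a * f x) \<in> V) \<and>
     (\<forall>f\<in>V. \<forall>g. L2 \<mu> g \<and> (AE x in \<mu>. f x = g x) \<longrightarrow> g \<in> V) \<and>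
     (\<forall>S g. (\<forall>n. S n \<in> V) \<and> L2_limit \<mu> S g \<longrightarrow> g \<in> V)"

definition riesz_basis :: "'k measure \<Rightarrow> 'i set \<Rightarrow> ('i \<Rightarrow> 'k \<Rightarrow> complex) \<Rightarrow> ('k \<Rightarrow> complex) set \<Rightarrow> bool" where
  "riesz_basis \<mu> I e V \<longleftrightarrow>
     (\<forall>i\<in>I. e i \<in> V) \<and>
     (\<forall>g\<in>V. \<forall>\<epsilon>>0. \<exists>F c. finite F \<and> F \<subseteq> I \<and>
         l2_norm \<mu> (\<lambda>x. g x - (\<Sum>i\<in>F. c i * e i x)) < \<epsilon>) \<and>
     (\<exists>A B. 0 < A \<and> A \<le> B \<and>
        (\<forall>F c. finite F \<and> F \<subseteq> I \<longrightarrow>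
           A * (\<Sum>i\<in>F. (cmod (c i))\<^sup>2) \<le> (l2_norm \<mu> (\<lambda>x. \<Sum>i\<in>F. c i * e i x))\<^sup>2 \<and>
           (l2_norm \<mu> (\<lambda>x. \<Sum>i\<in>F. c i * e i x))\<^sup>2 \<le> B * (\<Sum>i\<in>F. (cmod (c i))\<^sup>2)))"

definition MRA :: "'k::field measure \<Rightarrow> 'k \<Rightarrow> (nat \<Rightarrow> 'k) \<Rightarrow> (int \<Rightarrow> ('k \<Rightarrow> complex) set)
                   \<Rightarrow> ('k \<Rightarrow> complex) \<Rightarrow> bool" where
  "MRA \<mu> pr u V \<phi> \<longleftrightarrow>
     (\<forall>j. closed_subspace \<mu> (V j)) \<and>
     (\<forall>j. V j \<subseteq> V (j + 1)) \<and>
     (\<forall>f. L2 \<mu> f \<longrightarrow> (\<forall>\<epsilon>>0. \<exists>j. \<exists>g\<in>V j. l2_norm \<mu> (\<lambda>x. f x - g x) < \<epsilon>)) \<and>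
     (\<Inter>j. V j) = {f. L2 \<mu> f \<and> (AE x in \<mu>. f x = 0)} \<and>
     (\<forall>j f. f \<in> V j \<longleftrightarrow> (\<lambda>x. f (inverse pr * x)) \<in> V (j + 1)) \<and>
     \<phi> \<in> V 0 \<and>
     riesz_basis \<mu> UNIV (\<lambda>k x. \<phi> (x - u k)) (V 0)"

definition refinement_eq ::
  "'k::field measure \<Rightarrow> nat \<Rightarrow> 'k \<Rightarrow> (nat \<Rightarrow> 'k) \<Rightarrow> ('k \<Rightarrow> complex) \<Rightarrow> (nat \<Rightarrow> complex)
     \<Rightarrow> ('k \<Rightarrow> complex) \<Rightarrow> bool" where
  "refinement_eq \<mu> q pr u f a g \<longleftrightarrow>
     L2_limit \<mu> (\<lambda>N x. of_real (sqrt (real q)) * (\<Sum>k<N. a k * g (inverse pr * x - u k))) f"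

end

theory Submission
  imports Defs
begin

locale lfield =
  fixes absv :: "'k::field \<Rightarrow> real" and \<mu> :: "'k measure" and p c :: nat and pr :: 'k
  assumes K: "local_field_pc absv \<mu> p c pr"
begin

abbreviation "qq \<equiv> p ^ c"

lemma pprime: "prime p" and charp: "CHAR('k) = p" and c1: "c \<ge> 1"
  and av_nn: "\<And>x. absv x \<ge> 0" and av0: "\<And>x. absv x = 0 \<longleftrightarrow> x = 0"
  and av_mult: "\<And>x y. absv (x * y) = absv x * absv y"
  and av_ultra: "\<And>x y. absv (x + y) \<le> max (absv x) (absv y)"
  and av_vals: "\<And>x. x \<noteq> 0 \<Longrightarrow> (\<exists>n::int. absv x = real qq powr real_of_int n)"
  and av_pr: "absv pr = 1 / real qq"
  and res_fin: "finite (residue_classes absv)" and res_card: "card (residue_classes absv) = qq"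
  and sets_mu: "sets \<mu> = sigma_sets UNIV {{x. absv (x - a) \<le> r} | a r. True}"
  and trans_meas: "\<And>a. (\<lambda>x. x + a) \<in> measurable \<mu> \<mu>"
  and trans_distr: "\<And>a. distr \<mu> \<mu> (\<lambda>x. x + a) = \<mu>"
  and muD: "emeasure \<mu> (ring_int absv) = 1"
  using K unfolding local_field_pc_def by auto

lemma p2: "p \<ge> 2" using pprime prime_ge_2_nat by blast
lemma q2: "qq \<ge> 2"
proof -
  have "p ^ 1 \<le> p ^ c" using c1 p2 by (intro power_increasing) linarith+
  moreover have "p ^ 1 = p" by (rule power_one_right)
  ultimately show ?thesis using p2 by linarith
qed
lemma qpos: "real qq > 0"
proof -
  have "0 < qq" using q2 by linarith
  thus ?thesis by (metis of_nat_0_less_iff)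
qed

lemma av1: "absv 1 = 1"
proof -
  have "absv 1 = absv 1 * absv 1" using av_mult[of 1 1] by simp
  moreover have "absv 1 \<noteq> 0" using av0 by simp
  ultimately show ?thesis by (metis mult_cancel_left1)
qed

lemma av_m1: "absv (-1) = 1"
proof -
  have "absv (-1) * absv (-1) = 1" using av_mult[of "-1" "-1"] av1 by simp
  hence "(absv (-1) - 1) * (absv (-1) + 1) = 0" by (simp add: algebra_simps)
  moreover have "absv (-1) + 1 \<noteq> 0" using av_nn[of "-1"] by linarith
  ultimately show ?thesis by simp
qed

lemma av_neg: "absv (- x) = absv x"
  using av_mult[of "-1" x] av_m1 by simp

lemma av_sym: "absv (x - y) = absv (y - x)"
  using av_neg[of "x - y"] by simp

lemma av_inv: "x \<noteq> 0 \<Longrightarrow> absv (inverse x) = 1 / absv x"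
proof -
  assume "x \<noteq> 0"
  hence "absv (inverse x) * absv x = 1" using av_mult[of "inverse x" x] av1 by simp
  moreover have "absv x \<noteq> 0" using av0 \<open>x \<noteq> 0\<close> by simp
  ultimately show ?thesis by (simp add: eq_divide_eq)
qed

lemma pr_nz: "pr \<noteq> 0"
proof
  assume "pr = 0"
  hence "absv pr = 0" using av0 by simp
  thus False using av_pr qpos p2 by simp
qed

lemma av_ip: "absv (inverse pr) = real qq" using av_inv[OF pr_nz] av_pr by simp

lemma av_tri: "absv (x - z) \<le> max (absv (x - y)) (absv (y - z))"
  using av_ultra[of "x - y" "y - z"] by simp

lemma q1: "1 < real qq"
proof -
  have "1 < qq" using q2 by linarith
  thus ?thesis by (metis of_nat_1 of_nat_less_iff)
qed

lemma av_lt1: assumes "absv x < 1" shows "absv x \<le> 1 / real qq"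
proof (cases "x = 0")
  case True
  have "absv 0 = 0" using av0 by simp
  thus ?thesis using True qpos by simp
next
  case False
  then obtain n :: int where n: "absv x = real qq powr n" using av_vals by blast
  have "n < 0"
  proof (rule ccontr)
    assume "\<not> n < 0"
    hence "1 \<le> real qq powr n" using ge_one_powr_ge_zero[of "real qq" "real_of_int n"] q1 by linarith
    thus False using assms n by linarith
  qed
  hence "real_of_int n \<le> -1" by linarith
  hence "real qq powr n \<le> real qq powr (-1)" using q1 powr_mono[of "real_of_int n" "-1" "real qq"] by linarith
  also have "\<dots> = 1 / real qq" using qpos by (rule powr_neg_one)
  finally show ?thesis using n by linarith
qed

definition Ball :: "'k \<Rightarrow> real \<Rightarrow> 'k set" where "Ball a r = {x. absv (x - a) \<le> r}"

definition Balls :: "'k set set" where "Balls = {Ball a r | a r. True}"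

lemma sets_mu': "sets \<mu> = sigma_sets UNIV Balls"
  using sets_mu unfolding Balls_def Ball_def .

lemma space_mu: "space \<mu> = UNIV"
proof -
  have "UNIV \<in> sets \<mu>" unfolding sets_mu' by (rule sigma_sets_top)
  thus ?thesis using sets.sets_into_space by blast
qed

lemma Ball_sets[measurable]: "Ball a r \<in> sets \<mu>"
  unfolding sets_mu' Balls_def by (rule sigma_sets.Basic) blast

lemma Ball_recenter: assumes "y \<in> Ball x r" shows "Ball y r = Ball x r"
proof -
  have y: "absv (y - x) \<le> r" using assms unfolding Ball_def by simp
  hence y': "absv (x - y) \<le> r" using av_sym[of x y] by linarith
  have "absv (z - x) \<le> r \<longleftrightarrow> absv (z - y) \<le> r" for z
  proof
    assume "absv (z - x) \<le> r"
    thus "absv (z - y) \<le> r" using av_tri[of z y x] y' by linarith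
  next
    assume "absv (z - y) \<le> r"
    thus "absv (z - x) \<le> r" using av_tri[of z x y] y by linarith
  qed
  thus ?thesis unfolding Ball_def by blast
qed

lemma Int_stable_Balls: "Int_stable Balls"
proof (rule Int_stableI)
  fix A B assume "A \<in> Balls" "B \<in> Balls"
  then obtain a r b s where AB: "A = Ball a r" "B = Ball b s" unfolding Balls_def by auto
  show "A \<inter> B \<in> Balls"
  proof (cases "A \<inter> B = {}")
    case True
    have "\<not> absv x \<le> -1" for x using av_nn[of x] by linarith
    hence "Ball 0 (-1) = {}" unfolding Ball_def by auto
    hence "A \<inter> B = Ball 0 (-1)" using True by simp
    thus ?thesis unfolding Balls_def by blast
  next
    case False
    then obtain z where z: "z \<in> A" "z \<in> B" by auto
    have "A = Ball z r" "B = Ball z s" using Ball_recenter[of z a r] Ball_recenter[of z b s] z AB by auto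
    hence "A \<inter> B = Ball z (min r s)" unfolding Ball_def by auto
    thus ?thesis unfolding Balls_def by blast
  qed
qed

lemma emeasure_trans: assumes "X \<in> sets \<mu>" shows "emeasure \<mu> ((\<lambda>x. x + a) -` X) = emeasure \<mu> X"
proof -
  have "emeasure (distr \<mu> \<mu> (\<lambda>x. x + a)) X = emeasure \<mu> ((\<lambda>x. x + a) -` X \<inter> space \<mu>)"
    using assms trans_meas by (rule emeasure_distr[rotated])
  thus ?thesis using trans_distr space_mu by simp
qed

lemma emeasure_Ball0: "emeasure \<mu> (Ball a r) = emeasure \<mu> (Ball 0 r)"
proof -
  have "(\<lambda>x. x + a) -` Ball a r = Ball 0 r" unfolding Ball_def by auto
  thus ?thesis using emeasure_trans[of "Ball a r" a] by simp
qed

end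

context lfield begin

lemma av_power: "absv (x ^ n) = absv x ^ n"
  by (induction n) (simp_all add: av1 av_mult)

lemma av_scale_Ball: assumes "l \<noteq> 0"
  shows "z \<in> Ball (l * a) (absv l * r) \<longleftrightarrow> inverse l * z \<in> Ball a r"
proof -
  have "z - l * a = l * (inverse l * z - a)" using assms by (simp add: algebra_simps)
  hence "absv (z - l * a) = absv l * absv (inverse l * z - a)" using av_mult by simp
  moreover have "absv l > 0" using assms av0 av_nn by (metis less_eq_real_def)
  ultimately show ?thesis unfolding Ball_def by simp
qed

lemma D_Ball: "ring_int absv = Ball 0 1"
  unfolding ring_int_def Ball_def by simp

lemma class_Ball: assumes "C \<in> residue_classes absv"
  shows "\<exists>x. absv x \<le> 1 \<and> C = Ball x (1 / real qq)"
proof -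
  obtain x where x: "x \<in> ring_int absv" and C: "C = {y \<in> ring_int absv. x - y \<in> prime_ideal absv}"
    using assms unfolding residue_classes_def by blast
  have x1: "absv x \<le> 1" using x unfolding ring_int_def by simp
  have "y \<in> C \<longleftrightarrow> absv (y - x) \<le> 1 / real qq" for y
  proof
    assume "y \<in> C"
    hence "absv (x - y) < 1" unfolding C prime_ideal_def by simp
    thus "absv (y - x) \<le> 1 / real qq" using av_lt1 av_sym by metis
  next
    assume a: "absv (y - x) \<le> 1 / real qq"
    have "1 / real qq < 1" using q1 qpos by (simp add: divide_less_eq)
    hence lt: "absv (x - y) < 1" using a av_sym[of x y] by linarith
    have "absv y \<le> max (absv x) (absv (y - x))" using av_ultra[of x "y - x"] by simp
    hence "absv y \<le> 1" using x1 a \<open>1 / real qq < 1\<close> by linarith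
    thus "y \<in> C" unfolding C ring_int_def prime_ideal_def using lt by simp
  qed
  hence "C = Ball x (1 / real qq)" unfolding Ball_def by blast
  thus ?thesis using x1 by blast
qed

lemma classes_Union: "\<Union> (residue_classes absv) = ring_int absv"
proof
  show "\<Union> (residue_classes absv) \<subseteq> ring_int absv" unfolding residue_classes_def by blast
  show "ring_int absv \<subseteq> \<Union> (residue_classes absv)"
  proof
    fix y assume y: "y \<in> ring_int absv"
    have "absv (y - y) < 1" using av0[of 0] by simp
    hence "y \<in> {z \<in> ring_int absv. y - z \<in> prime_ideal absv}" using y unfolding prime_ideal_def by simp
    moreover have "{z \<in> ring_int absv. y - z \<in> prime_ideal absv} \<in> residue_classes absv"
      unfolding residue_classes_def using y by blast
    ultimately show "y \<in> \<Union> (residue_classes absv)" by blast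
  qed
qed

lemma classes_disj: assumes "C \<in> residue_classes absv" "C' \<in> residue_classes absv" "z \<in> C" "z \<in> C'"
  shows "C = C'"
proof -
  obtain x x' where X: "C = Ball x (1 / real qq)" "C' = Ball x' (1 / real qq)"
    using class_Ball assms(1,2) by blast
  from assms(3) X(1) have "z \<in> Ball x (1 / real qq)" by simp
  hence e1: "Ball z (1 / real qq) = Ball x (1 / real qq)" by (rule Ball_recenter)
  from assms(4) X(2) have "z \<in> Ball x' (1 / real qq)" by simp
  hence e2: "Ball z (1 / real qq) = Ball x' (1 / real qq)" by (rule Ball_recenter)
  show ?thesis using X e1 e2 by simp
qed

definition ctr :: "'k set \<Rightarrow> 'k" where
  "ctr C = (SOME x. absv x \<le> 1 \<and> C = Ball x (1 / real qq))"

lemma ctr: assumes "C \<in> residue_classes absv" shows "C = Ball (ctr C) (1 / real qq)"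
proof -
  have "\<exists>x. absv x \<le> 1 \<and> C = Ball x (1 / real qq)" by (rule class_Ball[OF assms])
  from someI_ex[OF this] show ?thesis unfolding ctr_def by blast
qed

lemma subdiv: assumes l: "l \<noteq> 0"
  shows "emeasure \<mu> (Ball 0 (absv l)) = of_nat qq * emeasure \<mu> (Ball 0 (absv l / real qq))"
proof -
  define Cls where "Cls = residue_classes absv"
  define F where "F C = Ball (l * ctr C) (absv l / real qq)" for C
  have F: "F C = {z. inverse l * z \<in> C}" if "C \<in> Cls" for C
  proof -
    have Cb: "Ball (ctr C) (1 / real qq) = C" using ctr that unfolding Cls_def by blast
    have "z \<in> F C \<longleftrightarrow> inverse l * z \<in> Ball (ctr C) (1 / real qq)" for z
      using av_scale_Ball[OF l, of z "ctr C" "1 / real qq"] unfolding F_def by simp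
    hence "z \<in> F C \<longleftrightarrow> inverse l * z \<in> C" for z by (simp only: Cb)
    thus ?thesis by blast
  qed
  have B0: "Ball 0 (absv l) = {z. inverse l * z \<in> ring_int absv}"
  proof -
    have "z \<in> Ball 0 (absv l) \<longleftrightarrow> inverse l * z \<in> Ball 0 1" for z
      using av_scale_Ball[OF l, of z 0 1] by simp
    thus ?thesis unfolding D_Ball by blast
  qed
  have U: "(\<Union>C\<in>Cls. F C) = Ball 0 (absv l)"
    unfolding B0 using F classes_Union unfolding Cls_def by blast
  have disj: "disjoint_family_on F Cls"
    unfolding disjoint_family_on_def
  proof (intro ballI impI)
    fix C C' assume C: "C \<in> Cls" "C' \<in> Cls" "C \<noteq> C'"
    show "F C \<inter> F C' = {}"
    proof (rule ccontr)
      assume "F C \<inter> F C' \<noteq> {}"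
      then obtain z where "inverse l * z \<in> C" "inverse l * z \<in> C'" using F C by blast
      thus False using classes_disj C unfolding Cls_def by blast
    qed
  qed
  have sets: "F ` Cls \<subseteq> sets \<mu>" unfolding F_def by auto
  have fin: "finite Cls" using res_fin unfolding Cls_def .
  have m: "emeasure \<mu> (F C) = emeasure \<mu> (Ball 0 (absv l / real qq))" for C
    unfolding F_def by (rule emeasure_Ball0)
  have "emeasure \<mu> (Ball 0 (absv l)) = emeasure \<mu> (\<Union>C\<in>Cls. F C)" using U by simp
  also have "\<dots> = (\<Sum>C\<in>Cls. emeasure \<mu> (F C))"
    using sum_emeasure[OF sets disj fin] by simp
  also have "\<dots> = (\<Sum>C\<in>Cls. emeasure \<mu> (Ball 0 (absv l / real qq)))"
    by (rule sum.cong[OF refl]) (rule m)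
  also have "\<dots> = of_nat (card Cls) * emeasure \<mu> (Ball 0 (absv l / real qq))"
    by (rule sum_constant)
  also have "card Cls = qq" using res_card unfolding Cls_def .
  finally show ?thesis .
qed

end

context lfield begin

declare of_nat_power [simp del]

lemma Ball_zero: "Ball a 0 = {a}"
proof -
  have "absv (x - a) \<le> 0 \<longleftrightarrow> x = a" for x
    using av0[of "x - a"] av_nn[of "x - a"] by auto
  thus ?thesis unfolding Ball_def by auto
qed

lemma ennr_div: assumes e: "ennreal t = of_nat qq * X" and t: "t \<ge> 0"
  shows "X = ennreal (t / real qq)"
proof (cases X)
  case (real y)
  have o: "(of_nat qq :: ennreal) = ennreal (real qq)" by (rule ennreal_of_nat_eq_real_of_nat)
  have m: "ennreal (real qq) * ennreal y = ennreal (real qq * y)"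
    by (rule ennreal_mult[symmetric]) (use real(1) in simp_all)
  have "ennreal t = ennreal (real qq * y)" using e unfolding o real(2) m .
  moreover have "real qq * y \<ge> 0" using real(1) by simp
  ultimately have "t = real qq * y" using t ennreal_inj by blast
  hence "y = t / real qq" using qpos by (simp add: field_simps)
  thus ?thesis using real(2) by simp
next
  case top
  have "qq \<noteq> 0" using q2 by linarith
  hence "of_nat qq \<noteq> (0::ennreal)" by simp
  hence "of_nat qq * X = top" using top ennreal_mult_eq_top_iff by blast
  hence "ennreal t = top" using e by simp
  thus ?thesis by simp
qed

lemma D_meas: "emeasure \<mu> (Ball 0 1) = 1" using muD D_Ball by simp

lemma ball_small: "emeasure \<mu> (Ball 0 ((1 / real qq) ^ n)) = ennreal ((1 / real qq) ^ n)"
proof (induction n)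
  case 0
  have "(1 / real qq) ^ 0 = 1" by (rule power_0)
  thus ?case using D_meas by simp
next
  case (Suc n)
  have l: "pr ^ n \<noteq> 0" using pr_nz by (rule power_not_zero)
  have a: "absv (pr ^ n) = (1 / real qq) ^ n" by (simp only: av_power av_pr)
  have "emeasure \<mu> (Ball 0 ((1 / real qq) ^ n)) = of_nat qq * emeasure \<mu> (Ball 0 ((1 / real qq) ^ n / real qq))"
    using subdiv[OF l] unfolding a .
  hence e: "ennreal ((1 / real qq) ^ n) = of_nat qq * emeasure \<mu> (Ball 0 ((1 / real qq) ^ n / real qq))"
    unfolding Suc.IH .
  have "(1 / real qq) ^ n \<ge> 0" using qpos by simp
  with e have r: "emeasure \<mu> (Ball 0 ((1 / real qq) ^ n / real qq)) = ennreal ((1 / real qq) ^ n / real qq)"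
    by (rule ennr_div)
  have eq: "(1 / real qq) ^ n / real qq = (1 / real qq) ^ Suc n"
    unfolding power_Suc2 by (simp only: times_divide_eq_right mult_1_right)
  show ?case unfolding eq[symmetric] by (rule r)
qed

lemma sing0: "emeasure \<mu> {a} = 0"
proof -
  have s: "Ball a 0 = {a}" "Ball 0 0 = {0::'k}" by (rule Ball_zero)+
  have le: "emeasure \<mu> (Ball 0 0) \<le> ennreal ((1 / real qq) ^ n)" for n
  proof -
    have "absv (0 - 0) = 0" using av0 by simp
    hence "{0} \<subseteq> Ball 0 ((1 / real qq) ^ n)" unfolding Ball_def using qpos by simp
    hence "Ball 0 0 \<subseteq> Ball 0 ((1 / real qq) ^ n)" using s(2) by simp
    hence "emeasure \<mu> (Ball 0 0) \<le> emeasure \<mu> (Ball 0 ((1 / real qq) ^ n))"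
      by (intro emeasure_mono) auto
    thus ?thesis using ball_small by simp
  qed
  have "(\<lambda>n. (1 / real qq) ^ n) \<longlonglongrightarrow> 0" using q1 qpos by (intro LIMSEQ_power_zero) simp
  hence lim: "(\<lambda>n. ennreal ((1 / real qq) ^ n)) \<longlonglongrightarrow> ennreal 0" by (rule tendsto_ennrealI)
  have "emeasure \<mu> (Ball 0 0) \<le> ennreal 0" by (rule LIMSEQ_le_const[OF lim]) (use le in blast)
  hence "emeasure \<mu> (Ball 0 0) = 0" by simp
  thus ?thesis using emeasure_Ball0[of a 0] s by simp
qed

lemma vg_le: fixes m :: int assumes "real qq powr m \<le> s" "s < real qq powr (m + 1)"
  shows "absv x \<le> s \<longleftrightarrow> absv x \<le> real qq powr m"
proof (cases "x = 0")
  case True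
  have "absv x = 0" using True av0 by simp
  moreover have "real qq powr m > 0" using qpos by simp
  ultimately show ?thesis using assms by linarith
next
  case False
  then obtain k :: int where k: "absv x = real qq powr k" using av_vals by blast
  show ?thesis
  proof (cases "k \<le> m")
    case True
    hence "real qq powr k \<le> real qq powr m" using q1 by (intro powr_mono) auto
    thus ?thesis using k assms by linarith
  next
    case False
    hence "real_of_int m + 1 \<le> real_of_int k" by linarith
    hence "real qq powr (m + 1) \<le> real qq powr k" using q1 by (intro powr_mono) auto
    moreover have "real qq powr m < real qq powr (m + 1)" using q1 by simp
    ultimately show ?thesis using k assms by linarith
  qed
qed

lemma elem_powr: "\<exists>l. l \<noteq> 0 \<and> absv l = real qq powr (real_of_int n)"
proof (cases "n \<ge> 0")
  case True
  have "absv (inverse pr ^ nat n) = real qq ^ nat n" using av_power av_ip by simp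
  also have "\<dots> = real qq powr (real (nat n))" using qpos by (simp add: powr_realpow)
  also have "real (nat n) = real_of_int n" using True by simp
  finally show ?thesis using pr_nz by (intro exI[of _ "inverse pr ^ nat n"]) simp
next
  case False
  have "absv (pr ^ nat (-n)) = (1 / real qq) ^ nat (-n)" using av_power av_pr by simp
  also have "\<dots> = inverse (real qq ^ nat (-n))" by (simp add: power_one_over inverse_eq_divide)
  also have "\<dots> = inverse (real qq powr (real (nat (-n))))" using qpos
    by (simp add: powr_realpow)
  also have "\<dots> = real qq powr (- real (nat (-n)))" by (simp add: powr_minus)
  also have "- real (nat (-n)) = real_of_int n" using False by simp
  finally show ?thesis using pr_nz by (intro exI[of _ "pr ^ nat (-n)"]) simp
qed

lemma round_ball: assumes r: "r > 0"
  shows "\<exists>l. l \<noteq> 0 \<and> Ball 0 r = Ball 0 (absv l) \<and> Ball 0 (r / real qq) = Ball 0 (absv l / real qq)"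
proof -
  define n where "n = \<lfloor>log (real qq) r\<rfloor>"
  have hn: "real qq powr n \<le> r \<and> r < real qq powr (n + 1)"
    using floor_log_eq_powr_iff[OF r q1] n_def by blast
  obtain l where l: "l \<noteq> 0" "absv l = real qq powr n" using elem_powr by blast
  have pd: "real qq powr (real_of_int n - 1) = real qq powr n / real qq"
    using qpos by (simp add: powr_diff)
  have pa: "real qq powr (real_of_int n + 1) = real qq powr n * real qq"
    using qpos by (simp add: powr_add)
  have h2a: "real qq powr n / real qq \<le> r / real qq" using hn qpos by (simp add: divide_right_mono)
  have h2b: "r / real qq < real qq powr n" using hn pa qpos by (simp add: divide_less_eq)
  have h2: "real qq powr (real_of_int (n - 1)) \<le> r / real qq \<and> r / real qq < real qq powr (real_of_int (n - 1) + 1)"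
    using h2a h2b pd by simp
  have "absv x \<le> r \<longleftrightarrow> absv x \<le> real qq powr n" for x using vg_le[of n r x] hn by blast
  hence "Ball 0 r = Ball 0 (absv l)" unfolding Ball_def l(2) by simp
  moreover have "Ball 0 (r / real qq) = Ball 0 (absv l / real qq)"
    unfolding Ball_def l(2) using vg_le[of "n - 1" "r / real qq"] h2 pd by simp
  ultimately show ?thesis using l by blast
qed

lemma halfball: "emeasure \<mu> (Ball a r) = of_nat qq * emeasure \<mu> (Ball a (r / real qq))"
proof -
  have "emeasure \<mu> (Ball 0 r) = of_nat qq * emeasure \<mu> (Ball 0 (r / real qq))"
  proof (cases "r > 0")
    case True
    then obtain l where l: "l \<noteq> 0" and e1: "Ball 0 r = Ball 0 (absv l)"
      and e2: "Ball 0 (r / real qq) = Ball 0 (absv l / real qq)"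
      using round_ball by blast
    show ?thesis unfolding e1 e2 by (rule subdiv[OF l])
  next
    case False
    show ?thesis
    proof (cases "r = 0")
      case True
      have "Ball 0 0 = {0::'k}" by (rule Ball_zero)
      thus ?thesis using True sing0 by simp
    next
      case False
      hence "r < 0" "r / real qq < 0" using \<open>\<not> r > 0\<close> qpos by (auto simp: divide_less_0_iff)
      have "\<not> absv x \<le> r" "\<not> absv x \<le> r / real qq" for x using av_nn[of x] \<open>r < 0\<close> \<open>r / real qq < 0\<close> by linarith+
      hence "Ball 0 r = {}" "Ball 0 (r / real qq) = {}" unfolding Ball_def by auto
      thus ?thesis by simp
    qed
  qed
  thus ?thesis using emeasure_Ball0[of a r] emeasure_Ball0[of a "r / real qq"] by simp
qed

lemma fin_ball: "emeasure \<mu> (Ball a r) \<noteq> \<infinity>"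
proof -
  have pw: "emeasure \<mu> (Ball 0 (real qq ^ i)) \<noteq> \<infinity>" for i
  proof (induction i)
    case 0 thus ?case using D_meas by simp
  next
    case (Suc i)
    have "emeasure \<mu> (Ball 0 (real qq ^ Suc i)) = of_nat qq * emeasure \<mu> (Ball 0 (real qq ^ Suc i / real qq))"
      by (rule halfball)
    also have "real qq ^ Suc i / real qq = real qq ^ i" unfolding power_Suc using qpos
      by (intro nonzero_mult_div_cancel_left) simp
    finally show ?case using Suc by (simp add: ennreal_mult_eq_top_iff of_nat_less_top less_top)
  qed
  obtain i where "r < real qq ^ i" using real_arch_pow[OF q1] by blast
  hence "Ball 0 r \<subseteq> Ball 0 (real qq ^ i)" unfolding Ball_def by auto
  hence "emeasure \<mu> (Ball 0 r) \<le> emeasure \<mu> (Ball 0 (real qq ^ i))" by (intro emeasure_mono) auto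
  hence "emeasure \<mu> (Ball 0 r) \<noteq> \<infinity>" using pw[of i] by (auto simp: top_unique)
  thus ?thesis using emeasure_Ball0[of a r] by simp
qed

lemma pre_mul: "(\<lambda>x. inverse pr * x) -` Ball a r = Ball (pr * a) (r / real qq)"
proof -
  have "z \<in> Ball (pr * a) (absv pr * r) \<longleftrightarrow> inverse pr * z \<in> Ball a r" for z
    by (rule av_scale_Ball[OF pr_nz])
  moreover have "absv pr * r = r / real qq" using av_pr by simp
  ultimately show ?thesis by auto
qed

lemma mul_meas[measurable]: "(\<lambda>x. inverse pr * x) \<in> measurable \<mu> \<mu>"
proof (rule measurable_sigma_sets[OF sets_mu'])
  show "Balls \<subseteq> Pow UNIV" by simp
  show "(\<lambda>x. inverse pr * x) \<in> space \<mu> \<rightarrow> UNIV" by simp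
  fix y assume "y \<in> Balls"
  then obtain a r where y: "y = Ball a r" unfolding Balls_def by blast
  show "(\<lambda>x. inverse pr * x) -` y \<inter> space \<mu> \<in> sets \<mu>" unfolding y pre_mul by simp
qed

lemma scale_measure_eq: "distr \<mu> \<mu> (\<lambda>x. inverse pr * x) = density \<mu> (\<lambda>_. ennreal (1 / real qq))"
proof (rule measure_eqI_generator_eq[OF Int_stable_Balls, of UNIV _ _ "\<lambda>i. Ball 0 (real qq ^ i)"])
  show "Balls \<subseteq> Pow UNIV" by simp
  show "sets (distr \<mu> \<mu> (\<lambda>x. inverse pr * x)) = sigma_sets UNIV Balls" using sets_mu' by simp
  show "sets (density \<mu> (\<lambda>_. ennreal (1 / real qq))) = sigma_sets UNIV Balls" using sets_mu' by simp
  show "range (\<lambda>i. Ball 0 (real qq ^ i)) \<subseteq> Balls" unfolding Balls_def by blast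
  show "(\<Union>i. Ball 0 (real qq ^ i)) = UNIV"
  proof -
    have "\<exists>i. x \<in> Ball 0 (real qq ^ i)" for x
    proof -
      obtain i where "absv x < real qq ^ i" using real_arch_pow[OF q1] by blast
      thus ?thesis unfolding Ball_def by (intro exI[of _ i]) simp
    qed
    thus ?thesis by blast
  qed
  have ed: "emeasure (distr \<mu> \<mu> (\<lambda>x. inverse pr * x)) (Ball a r) = emeasure \<mu> (Ball (pr * a) (r / real qq))" for a r
  proof -
    have "emeasure (distr \<mu> \<mu> (\<lambda>x. inverse pr * x)) (Ball a r) = emeasure \<mu> ((\<lambda>x. inverse pr * x) -` Ball a r \<inter> space \<mu>)"
      by (rule emeasure_distr[OF mul_meas Ball_sets])
    thus ?thesis unfolding pre_mul space_mu by simp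
  qed
  show "emeasure (distr \<mu> \<mu> (\<lambda>x. inverse pr * x)) (Ball 0 (real qq ^ i)) \<noteq> \<infinity>" for i
    unfolding ed by (rule fin_ball)
  fix X assume "X \<in> Balls"
  then obtain a r where X: "X = Ball a r" unfolding Balls_def by blast
  have "emeasure (distr \<mu> \<mu> (\<lambda>x. inverse pr * x)) X = emeasure \<mu> (Ball (pr * a) (r / real qq))"
    unfolding X by (rule ed)
  also have "\<dots> = emeasure \<mu> (Ball a (r / real qq))"
    using emeasure_Ball0[of "pr * a" "r / real qq"] emeasure_Ball0[of a "r / real qq"] by simp
  finally have e1: "emeasure (distr \<mu> \<mu> (\<lambda>x. inverse pr * x)) X = emeasure \<mu> (Ball a (r / real qq))" .
  have m1: "emeasure (density \<mu> (\<lambda>_. ennreal (1 / real qq))) X = ennreal (1 / real qq) * emeasure \<mu> X"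
    unfolding X by (simp add: emeasure_density nn_integral_cmult_indicator)
  have m2: "emeasure \<mu> X = of_nat qq * emeasure \<mu> (Ball a (r / real qq))"
    unfolding X by (rule halfball)
  have m3: "ennreal (1 / real qq) * of_nat qq = 1"
    using qpos by (simp add: ennreal_of_nat_eq_real_of_nat ennreal_mult[symmetric])
  have m4: "ennreal (1 / real qq) * (of_nat qq * emeasure \<mu> (Ball a (r / real qq))) = emeasure \<mu> (Ball a (r / real qq))"
    using m3 by (simp add: mult.assoc[symmetric])
  show "emeasure (distr \<mu> \<mu> (\<lambda>x. inverse pr * x)) X = emeasure (density \<mu> (\<lambda>_. ennreal (1 / real qq))) X"
    unfolding e1 m1 m2 m4 ..
qed

end

context lfield begin

lemma trans_integral:
  fixes h :: "'k \<Rightarrow> 'b::{banach, second_countable_topology}"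
  assumes h: "h \<in> borel_measurable \<mu>"
  shows "(\<integral>x. h (x + a) \<partial>\<mu>) = integral\<^sup>L \<mu> h"
proof -
  have "integral\<^sup>L (distr \<mu> \<mu> (\<lambda>x. x + a)) h = (\<integral>x. h (x + a) \<partial>\<mu>)"
    by (rule integral_distr[OF trans_meas h])
  thus ?thesis unfolding trans_distr by simp
qed

lemma trans_integrable:
  fixes h :: "'k \<Rightarrow> 'b::{banach, second_countable_topology}"
  assumes h: "h \<in> borel_measurable \<mu>"
  shows "integrable \<mu> (\<lambda>x. h (x + a)) \<longleftrightarrow> integrable \<mu> h"
proof -
  have "integrable (distr \<mu> \<mu> (\<lambda>x. x + a)) h \<longleftrightarrow> integrable \<mu> (\<lambda>x. h (x + a))"
    by (rule integrable_distr_eq[OF trans_meas h])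
  thus ?thesis unfolding trans_distr by simp
qed

lemma trans_meas_comp:
  assumes h: "h \<in> borel_measurable \<mu>"
  shows "(\<lambda>x. h (x + a)) \<in> borel_measurable \<mu>"
  using measurable_compose[OF trans_meas h] by simp

lemma mul_meas_comp:
  assumes h: "h \<in> borel_measurable \<mu>"
  shows "(\<lambda>x. h (inverse pr * x)) \<in> borel_measurable \<mu>"
  using measurable_compose[OF mul_meas h] by simp

lemma scale_integral:
  fixes h :: "'k \<Rightarrow> 'b::{banach, second_countable_topology}"
  assumes h: "h \<in> borel_measurable \<mu>"
  shows "(\<integral>x. h (inverse pr * x) \<partial>\<mu>) = (1 / real qq) *\<^sub>R integral\<^sup>L \<mu> h"
proof -
  have "integral\<^sup>L (distr \<mu> \<mu> (\<lambda>x. inverse pr * x)) h = (\<integral>x. h (inverse pr * x) \<partial>\<mu>)"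
    by (rule integral_distr[OF mul_meas h])
  moreover have "integral\<^sup>L (density \<mu> (\<lambda>_. ennreal (1 / real qq))) h = (\<integral>x. (1 / real qq) *\<^sub>R h x \<partial>\<mu>)"
    by (rule integral_density[OF h]) auto
  ultimately show ?thesis unfolding scale_measure_eq by simp
qed

lemma scale_integrable:
  fixes h :: "'k \<Rightarrow> 'b::{banach, second_countable_topology}"
  assumes h: "h \<in> borel_measurable \<mu>"
  shows "integrable \<mu> (\<lambda>x. h (inverse pr * x)) \<longleftrightarrow> integrable \<mu> h"
proof -
  have "integrable (distr \<mu> \<mu> (\<lambda>x. inverse pr * x)) h \<longleftrightarrow> integrable \<mu> (\<lambda>x. h (inverse pr * x))"
    by (rule integrable_distr_eq[OF mul_meas h])
  moreover have "integrable (density \<mu> (\<lambda>_. ennreal (1 / real qq))) h \<longleftrightarrow> integrable \<mu> (\<lambda>x. (1 / real qq) *\<^sub>R h x)"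
    by (rule integrable_density[OF h]) auto
  moreover have "integrable \<mu> (\<lambda>x. (1 / real qq) *\<^sub>R h x) \<longleftrightarrow> integrable \<mu> h"
  proof
    assume "integrable \<mu> (\<lambda>x. (1 / real qq) *\<^sub>R h x)"
    hence "integrable \<mu> (\<lambda>x. real qq *\<^sub>R ((1 / real qq) *\<^sub>R h x))" by (rule integrable_scaleR_right)
    moreover have "real qq *\<^sub>R ((1 / real qq) *\<^sub>R h x) = h x" for x using qpos p2 by simp
    ultimately show "integrable \<mu> h" by simp
  next
    assume "integrable \<mu> h"
    thus "integrable \<mu> (\<lambda>x. (1 / real qq) *\<^sub>R h x)" by (rule integrable_scaleR_right)
  qed
  ultimately show ?thesis unfolding scale_measure_eq by simp
qed

lemma L2_meas: "L2 \<mu> f \<Longrightarrow> f \<in> borel_measurable \<mu>" unfolding L2_def by simp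
lemma L2_int: "L2 \<mu> f \<Longrightarrow> integrable \<mu> (\<lambda>x. (cmod (f x))\<^sup>2)" unfolding L2_def by simp

lemma cnj_borel: "cnj \<in> borel_measurable borel"
  by (rule borel_measurable_continuous_onI) (rule linear_continuous_on[OF bounded_linear_cnj])

lemma cnj_meas[measurable]: "g \<in> borel_measurable M \<Longrightarrow> (\<lambda>x. cnj (g x)) \<in> borel_measurable M"
  using measurable_compose[OF _ cnj_borel] by blast

lemma sq_ineq1: fixes a b :: real shows "(a + b)\<^sup>2 \<le> 2 * a\<^sup>2 + 2 * b\<^sup>2"
proof -
  have h: "0 \<le> (a - b) * (a - b)" by simp
  have e1: "(a - b) * (a - b) = a * a - 2 * a * b + b * b" by (simp add: algebra_simps)
  have e2: "(a + b)\<^sup>2 = a * a + 2 * a * b + b * b" by (simp add: algebra_simps power2_eq_square)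
  have e3: "2 * a\<^sup>2 + 2 * b\<^sup>2 = 2 * (a * a) + 2 * (b * b)" by (simp add: power2_eq_square)
  show ?thesis unfolding e2 e3 using h e1 by linarith
qed

lemma sq_ineq2: fixes a b :: real assumes "a \<ge> 0" "b \<ge> 0" shows "a * b \<le> a\<^sup>2 + b\<^sup>2"
proof -
  have h: "0 \<le> (a - b) * (a - b)" by simp
  have e1: "(a - b) * (a - b) = a * a - 2 * a * b + b * b" by (simp add: algebra_simps)
  have e3: "a\<^sup>2 + b\<^sup>2 = a * a + b * b" by (simp add: power2_eq_square)
  have "0 \<le> a * b" using assms by simp
  thus ?thesis unfolding e3 using h e1 by linarith
qed

lemma L2_add: assumes "L2 \<mu> f" "L2 \<mu> g" shows "L2 \<mu> (\<lambda>x. f x + g x)"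
proof -
  have m[measurable]: "f \<in> borel_measurable \<mu>" "g \<in> borel_measurable \<mu>" using assms L2_meas by auto
  have i: "integrable \<mu> (\<lambda>x. 2 * (cmod (f x))\<^sup>2 + 2 * (cmod (g x))\<^sup>2)"
    using L2_int[OF assms(1)] L2_int[OF assms(2)] by simp
  have b: "norm ((cmod (f x + g x))\<^sup>2) \<le> norm (2 * (cmod (f x))\<^sup>2 + 2 * (cmod (g x))\<^sup>2)" for x
  proof -
    have "cmod (f x + g x) \<le> cmod (f x) + cmod (g x)" by (rule norm_triangle_ineq)
    hence "(cmod (f x + g x))\<^sup>2 \<le> (cmod (f x) + cmod (g x))\<^sup>2" by (rule power_mono) simp
    also have "\<dots> \<le> 2 * (cmod (f x))\<^sup>2 + 2 * (cmod (g x))\<^sup>2" by (rule sq_ineq1)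
    finally show ?thesis by simp
  qed
  have "integrable \<mu> (\<lambda>x. (cmod (f x + g x))\<^sup>2)"
  proof (rule Bochner_Integration.integrable_bound[OF i])
    show "(\<lambda>x. (cmod (f x + g x))\<^sup>2) \<in> borel_measurable \<mu>" by measurable
    show "AE x in \<mu>. norm ((cmod (f x + g x))\<^sup>2) \<le> norm (2 * (cmod (f x))\<^sup>2 + 2 * (cmod (g x))\<^sup>2)"
      using b by (intro AE_I2) blast
  qed
  thus ?thesis unfolding L2_def by simp
qed

lemma L2_cmult: assumes "L2 \<mu> f" shows "L2 \<mu> (\<lambda>x. a * f x)"
proof -
  have m[measurable]: "f \<in> borel_measurable \<mu>" using assms L2_meas by auto
  have "integrable \<mu> (\<lambda>x. (cmod a)\<^sup>2 * (cmod (f x))\<^sup>2)" using L2_int[OF assms] by simp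
  moreover have "(cmod (a * f x))\<^sup>2 = (cmod a)\<^sup>2 * (cmod (f x))\<^sup>2" for x by (simp add: norm_mult power_mult_distrib)
  ultimately show ?thesis unfolding L2_def by simp
qed

lemma L2_diff: assumes "L2 \<mu> f" "L2 \<mu> g" shows "L2 \<mu> (\<lambda>x. f x - g x)"
  using L2_add[OF assms(1) L2_cmult[OF assms(2), of "-1"]] by simp

lemma L2_prod: assumes "L2 \<mu> f" "L2 \<mu> g" shows "integrable \<mu> (\<lambda>x. f x * cnj (g x))"
proof -
  have m[measurable]: "f \<in> borel_measurable \<mu>" "g \<in> borel_measurable \<mu>" using assms L2_meas by auto
  have i: "integrable \<mu> (\<lambda>x. (cmod (f x))\<^sup>2 + (cmod (g x))\<^sup>2)"
    using L2_int[OF assms(1)] L2_int[OF assms(2)] by simp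
  have b: "norm (f x * cnj (g x)) \<le> norm ((cmod (f x))\<^sup>2 + (cmod (g x))\<^sup>2)" for x
  proof -
    have "norm (f x * cnj (g x)) = cmod (f x) * cmod (g x)" by (simp add: norm_mult)
    also have "\<dots> \<le> (cmod (f x))\<^sup>2 + (cmod (g x))\<^sup>2" by (rule sq_ineq2) simp_all
    finally show ?thesis by simp
  qed
  show ?thesis
  proof (rule Bochner_Integration.integrable_bound[OF i])
    show "(\<lambda>x. f x * cnj (g x)) \<in> borel_measurable \<mu>" by measurable
    show "AE x in \<mu>. norm (f x * cnj (g x)) \<le> norm ((cmod (f x))\<^sup>2 + (cmod (g x))\<^sup>2)"
      using b by (intro AE_I2) blast
  qed
qed

lemma CS_real: fixes X A B :: real
  assumes "\<And>t. 0 \<le> t\<^sup>2 * A - 2 * t * X + B" "X \<ge> 0" "A \<ge> 0" "B \<ge> 0"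
  shows "X \<le> sqrt A * sqrt B"
proof (cases "A = 0")
  case True
  have "X \<le> 0"
  proof (rule ccontr)
    assume "\<not> X \<le> 0"
    hence X: "X > 0" by simp
    have "0 \<le> ((B + 1) / (2 * X))\<^sup>2 * A - 2 * ((B + 1) / (2 * X)) * X + B" by (rule assms(1))
    also have "\<dots> = -1" using X True by (simp add: field_simps)
    finally show False by simp
  qed
  thus ?thesis using assms by simp
next
  case False
  hence A: "A > 0" using assms by simp
  have "0 \<le> (X / A)\<^sup>2 * A - 2 * (X / A) * X + B" by (rule assms(1))
  also have "\<dots> = B - X\<^sup>2 / A" using A by (simp add: field_simps power2_eq_square)
  finally have "X\<^sup>2 \<le> A * B" using A by (simp add: field_simps)
  hence "sqrt (X\<^sup>2) \<le> sqrt (A * B)" by (rule real_sqrt_le_mono)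
  thus ?thesis using assms by (simp add: real_sqrt_mult)
qed

lemma CS: assumes "L2 \<mu> f" "L2 \<mu> g"
  shows "cmod (l2_inner \<mu> f g) \<le> l2_norm \<mu> f * l2_norm \<mu> g"
proof -
  have m[measurable]: "f \<in> borel_measurable \<mu>" "g \<in> borel_measurable \<mu>" using assms L2_meas by auto
  have i1: "integrable \<mu> (\<lambda>x. (cmod (f x))\<^sup>2)" and i2: "integrable \<mu> (\<lambda>x. (cmod (g x))\<^sup>2)"
    using assms L2_int by auto
  have ip: "integrable \<mu> (\<lambda>x. f x * cnj (g x))" using L2_prod[OF assms] .
  have i3: "integrable \<mu> (\<lambda>x. cmod (f x) * cmod (g x))"
  proof -
    have "integrable \<mu> (\<lambda>x. norm (f x * cnj (g x)))" using ip by (rule integrable_norm)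
    thus ?thesis by (simp add: norm_mult)
  qed
  define A where "A = (\<integral>x. (cmod (f x))\<^sup>2 \<partial>\<mu>)"
  define B where "B = (\<integral>x. (cmod (g x))\<^sup>2 \<partial>\<mu>)"
  define X where "X = (\<integral>x. cmod (f x) * cmod (g x) \<partial>\<mu>)"
  have key: "0 \<le> t\<^sup>2 * A - 2 * t * X + B" for t
  proof -
    have "0 \<le> (\<integral>x. (t * cmod (f x) - cmod (g x))\<^sup>2 \<partial>\<mu>)" by (rule integral_nonneg_AE) auto
    also have "(\<lambda>x. (t * cmod (f x) - cmod (g x))\<^sup>2) =
       (\<lambda>x. t\<^sup>2 * (cmod (f x))\<^sup>2 - 2 * t * (cmod (f x) * cmod (g x)) + (cmod (g x))\<^sup>2)"
      by (rule ext) (simp add: power2_eq_square algebra_simps)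
    also have "(\<integral>x. t\<^sup>2 * (cmod (f x))\<^sup>2 - 2 * t * (cmod (f x) * cmod (g x)) + (cmod (g x))\<^sup>2 \<partial>\<mu>)
       = t\<^sup>2 * A - 2 * t * X + B"
      unfolding A_def B_def X_def using i1 i2 i3 by simp
    finally show ?thesis .
  qed
  have X0: "X \<ge> 0" unfolding X_def by (rule integral_nonneg_AE) auto
  have A0: "A \<ge> 0" unfolding A_def by (rule integral_nonneg_AE) auto
  have B0: "B \<ge> 0" unfolding B_def by (rule integral_nonneg_AE) auto
  have "cmod (l2_inner \<mu> f g) \<le> (\<integral>x. norm (f x * cnj (g x)) \<partial>\<mu>)"
    unfolding l2_inner_def by (rule integral_norm_bound)
  also have "\<dots> = X" unfolding X_def by (simp add: norm_mult)
  also have "\<dots> \<le> sqrt A * sqrt B" using CS_real[OF key X0 A0 B0] .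
  finally show ?thesis unfolding l2_norm_def A_def B_def .
qed

end

context lfield begin

lemma l2_norm_sym: "l2_norm \<mu> (\<lambda>x. f x - g x) = l2_norm \<mu> (\<lambda>x. g x - f x)"
  unfolding l2_norm_def by (simp add: norm_minus_commute)

lemma inner_split:
  assumes f: "L2 \<mu> f" and g: "L2 \<mu> g" and S: "L2 \<mu> S" and R: "L2 \<mu> R"
  shows "l2_inner \<mu> S R - l2_inner \<mu> f g =
     l2_inner \<mu> (\<lambda>x. S x - f x) (\<lambda>x. R x - g x) + l2_inner \<mu> (\<lambda>x. S x - f x) g
       + l2_inner \<mu> f (\<lambda>x. R x - g x)"
proof -
  have d1: "L2 \<mu> (\<lambda>x. S x - f x)" using L2_diff[OF S f] .
  have d2: "L2 \<mu> (\<lambda>x. R x - g x)" using L2_diff[OF R g] .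
  have i1: "integrable \<mu> (\<lambda>x. S x * cnj (R x))" using L2_prod[OF S R] .
  have i2: "integrable \<mu> (\<lambda>x. f x * cnj (g x))" using L2_prod[OF f g] .
  have i3: "integrable \<mu> (\<lambda>x. (S x - f x) * cnj (R x - g x))" using L2_prod[OF d1 d2] .
  have i4: "integrable \<mu> (\<lambda>x. (S x - f x) * cnj (g x))" using L2_prod[OF d1 g] .
  have i5: "integrable \<mu> (\<lambda>x. f x * cnj (R x - g x))" using L2_prod[OF f d2] .
  have pw: "S x * cnj (R x) - f x * cnj (g x) =
      (S x - f x) * cnj (R x - g x) + (S x - f x) * cnj (g x) + f x * cnj (R x - g x)" for x
    by (simp add: algebra_simps)
  have "l2_inner \<mu> S R - l2_inner \<mu> f g = (\<integral>x. S x * cnj (R x) - f x * cnj (g x) \<partial>\<mu>)"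
    unfolding l2_inner_def by (rule Bochner_Integration.integral_diff[OF i1 i2, symmetric])
  also have "\<dots> = (\<integral>x. (S x - f x) * cnj (R x - g x) + (S x - f x) * cnj (g x) + f x * cnj (R x - g x) \<partial>\<mu>)"
    unfolding pw ..
  also have "\<dots> = (\<integral>x. (S x - f x) * cnj (R x - g x) + (S x - f x) * cnj (g x) \<partial>\<mu>) + (\<integral>x. f x * cnj (R x - g x) \<partial>\<mu>)"
    by (rule Bochner_Integration.integral_add[OF Bochner_Integration.integrable_add[OF i3 i4] i5])
  also have "(\<integral>x. (S x - f x) * cnj (R x - g x) + (S x - f x) * cnj (g x) \<partial>\<mu>) =
      (\<integral>x. (S x - f x) * cnj (R x - g x) \<partial>\<mu>) + (\<integral>x. (S x - f x) * cnj (g x) \<partial>\<mu>)"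
    by (rule Bochner_Integration.integral_add[OF i3 i4])
  finally show ?thesis unfolding l2_inner_def .
qed

lemma L2_limit_inner:
  assumes Sf: "L2_limit \<mu> S f" and Rg: "L2_limit \<mu> R g"
  shows "(\<lambda>N. l2_inner \<mu> (S N) (R N)) \<longlonglongrightarrow> l2_inner \<mu> f g"
proof -
  have f: "L2 \<mu> f" and S: "\<And>N. L2 \<mu> (S N)" and nS: "(\<lambda>N. l2_norm \<mu> (\<lambda>x. f x - S N x)) \<longlonglongrightarrow> 0"
    using Sf unfolding L2_limit_def by auto
  have g: "L2 \<mu> g" and R: "\<And>N. L2 \<mu> (R N)" and nR: "(\<lambda>N. l2_norm \<mu> (\<lambda>x. g x - R N x)) \<longlonglongrightarrow> 0"
    using Rg unfolding L2_limit_def by auto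
  define a where "a N = l2_norm \<mu> (\<lambda>x. S N x - f x)" for N
  define b where "b N = l2_norm \<mu> (\<lambda>x. R N x - g x)" for N
  have "a = (\<lambda>N. l2_norm \<mu> (\<lambda>x. f x - S N x))" unfolding a_def by (rule ext, rule l2_norm_sym)
  hence a0: "a \<longlonglongrightarrow> 0" using nS by simp
  have "b = (\<lambda>N. l2_norm \<mu> (\<lambda>x. g x - R N x))" unfolding b_def by (rule ext, rule l2_norm_sym)
  hence b0: "b \<longlonglongrightarrow> 0" using nR by simp
  have t1: "(\<lambda>N. l2_inner \<mu> (\<lambda>x. S N x - f x) (\<lambda>x. R N x - g x)) \<longlonglongrightarrow> 0"
  proof (rule Lim_null_comparison)
    show "\<forall>\<^sub>F N in sequentially. norm (l2_inner \<mu> (\<lambda>x. S N x - f x) (\<lambda>x. R N x - g x)) \<le> a N * b N"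
      unfolding a_def b_def by (intro always_eventually allI CS L2_diff S R f g)
    show "(\<lambda>N. a N * b N) \<longlonglongrightarrow> 0" using tendsto_mult[OF a0 b0] by simp
  qed
  have t2: "(\<lambda>N. l2_inner \<mu> (\<lambda>x. S N x - f x) g) \<longlonglongrightarrow> 0"
  proof (rule Lim_null_comparison)
    show "\<forall>\<^sub>F N in sequentially. norm (l2_inner \<mu> (\<lambda>x. S N x - f x) g) \<le> a N * l2_norm \<mu> g"
      unfolding a_def by (intro always_eventually allI CS L2_diff S f g)
    show "(\<lambda>N. a N * l2_norm \<mu> g) \<longlonglongrightarrow> 0" using tendsto_mult[OF a0 tendsto_const] by simp
  qed
  have t3: "(\<lambda>N. l2_inner \<mu> f (\<lambda>x. R N x - g x)) \<longlonglongrightarrow> 0"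
  proof (rule Lim_null_comparison)
    show "\<forall>\<^sub>F N in sequentially. norm (l2_inner \<mu> f (\<lambda>x. R N x - g x)) \<le> l2_norm \<mu> f * b N"
      unfolding b_def by (intro always_eventually allI CS L2_diff R f g)
    show "(\<lambda>N. l2_norm \<mu> f * b N) \<longlonglongrightarrow> 0" using tendsto_mult[OF tendsto_const b0] by simp
  qed
  have "(\<lambda>N. l2_inner \<mu> (\<lambda>x. S N x - f x) (\<lambda>x. R N x - g x) + l2_inner \<mu> (\<lambda>x. S N x - f x) g
       + l2_inner \<mu> f (\<lambda>x. R N x - g x)) \<longlonglongrightarrow> 0 + 0 + 0"
    by (intro tendsto_add t1 t2 t3)
  hence "(\<lambda>N. l2_inner \<mu> (S N) (R N) - l2_inner \<mu> f g) \<longlonglongrightarrow> 0"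
    using inner_split[OF f g S R] by simp
  thus ?thesis by (rule LIM_zero_cancel)
qed

lemma L2_trans: assumes h: "L2 \<mu> h" shows "L2 \<mu> (\<lambda>x. h (x - v))"
proof -
  have m: "h \<in> borel_measurable \<mu>" using L2_meas[OF h] .
  have m2: "(\<lambda>x. h (x + - v)) \<in> borel_measurable \<mu>" by (rule trans_meas_comp[OF m])
  have m3: "(\<lambda>y. (cmod (h y))\<^sup>2) \<in> borel_measurable \<mu>" using m by measurable
  have "integrable \<mu> (\<lambda>x. (cmod (h (x + - v)))\<^sup>2)"
    using trans_integrable[OF m3, of "- v"] L2_int[OF h] by simp
  thus ?thesis using m2 unfolding L2_def by simp
qed

lemma l2_norm_trans: assumes m: "h \<in> borel_measurable \<mu>"
  shows "l2_norm \<mu> (\<lambda>x. h (x - v)) = l2_norm \<mu> h"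
proof -
  have m3: "(\<lambda>y. (cmod (h y))\<^sup>2) \<in> borel_measurable \<mu>" using m by measurable
  have "(\<integral>x. (cmod (h (x + - v)))\<^sup>2 \<partial>\<mu>) = (\<integral>x. (cmod (h x))\<^sup>2 \<partial>\<mu>)"
    by (rule trans_integral[OF m3])
  thus ?thesis unfolding l2_norm_def by simp
qed

lemma L2_limit_trans: assumes "L2_limit \<mu> S f"
  shows "L2_limit \<mu> (\<lambda>N x. S N (x - v)) (\<lambda>x. f (x - v))"
proof -
  have f: "L2 \<mu> f" and S: "\<And>N. L2 \<mu> (S N)" and nS: "(\<lambda>N. l2_norm \<mu> (\<lambda>x. f x - S N x)) \<longlonglongrightarrow> 0"
    using assms unfolding L2_limit_def by auto
  have "l2_norm \<mu> (\<lambda>x. f (x - v) - S N (x - v)) = l2_norm \<mu> (\<lambda>x. f x - S N x)" for N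
    using l2_norm_trans[OF L2_meas[OF L2_diff[OF f S]], of v] by simp
  thus ?thesis unfolding L2_limit_def using L2_trans f S nS by simp
qed

end

lemma digits_sum:
  fixes p :: nat
  assumes "\<forall>j<c. g j < p"
  shows "(\<Sum>j<c. g j * p ^ j) < p ^ c \<and> (\<forall>i<c. (\<Sum>j<c. g j * p ^ j) div p ^ i mod p = g i)"
  using assms
proof (induction c arbitrary: g)
  case 0 thus ?case by simp
next
  case (Suc c)
  define m where "m = (\<Sum>j<c. g (Suc j) * p ^ j)"
  have IH: "m < p ^ c \<and> (\<forall>i<c. m div p ^ i mod p = g (Suc i))"
    unfolding m_def using Suc.IH[of "\<lambda>j. g (Suc j)"] Suc.prems by simp
  have g0: "g 0 < p" using Suc.prems by simp
  have n: "(\<Sum>j<Suc c. g j * p ^ j) = g 0 + p * m"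
    unfolding m_def sum.lessThan_Suc_shift by (simp add: sum_distrib_left algebra_simps)
  have "p * (m + 1) \<le> p * p ^ c" using IH by (intro mult_le_mono2) simp
  hence lt: "g 0 + p * m < p ^ Suc c" using g0 by simp
  have md: "(g 0 + p * m) mod p = g 0" using g0 by simp
  have dv: "(g 0 + p * m) div p = m" using g0 by simp
  have "(g 0 + p * m) div p ^ i mod p = g i" if i: "i < Suc c" for i
  proof (cases i)
    case 0 thus ?thesis using md by simp
  next
    case (Suc i')
    have "(g 0 + p * m) div p ^ i = (g 0 + p * m) div p div p ^ i'"
      unfolding Suc power_Suc by (rule div_mult2_eq)
    also have "\<dots> = m div p ^ i'" unfolding dv ..
    finally show ?thesis using IH Suc i by simp
  qed
  thus ?case unfolding n using lt by blast
qed

context lfield begin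

lemma of_nat_modp: "(of_nat a :: 'k) = of_nat (a mod p)"
proof -
  have "a = a mod p + p * (a div p)" by simp
  hence "(of_nat a :: 'k) = of_nat (a mod p) + of_nat p * of_nat (a div p)"
    by (metis of_nat_add of_nat_mult)
  moreover have "(of_nat p :: 'k) = 0" using of_nat_CHAR[where 'a='k] charp by simp
  ultimately show ?thesis by simp
qed

context fixes \<zeta> :: "nat \<Rightarrow> 'k" begin

abbreviation "ud \<equiv> u_digit p c \<zeta> pr"
abbreviation "uu \<equiv> u_pt p c \<zeta> pr"

lemma ud0: "ud 0 = 0" unfolding u_digit_def by simp

lemma uu0: "uu 0 = 0" unfolding u_pt_def using ud0 by simp

lemma uu_sum: assumes "n < L" shows "uu n = (\<Sum>i<L. ud (n div qq ^ i mod qq) * inverse pr ^ i)"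
proof -
  have z: "ud (n div qq ^ i mod qq) * inverse pr ^ i = 0" if "i \<ge> Suc n" for i
  proof -
    have "n < 2 ^ n" by (rule less_exp)
    also have "(2::nat) ^ n \<le> qq ^ n" using q2 by (rule power_mono) simp
    also have "qq ^ n \<le> qq ^ i" using q2 that by (intro power_increasing) simp_all
    finally have "n div qq ^ i = 0" by simp
    thus ?thesis using ud0 by simp
  qed
  have "(\<Sum>i<L. ud (n div qq ^ i mod qq) * inverse pr ^ i) =
        (\<Sum>i<Suc n. ud (n div qq ^ i mod qq) * inverse pr ^ i) + (\<Sum>i\<in>{Suc n..<L}. ud (n div qq ^ i mod qq) * inverse pr ^ i)"
    using assms by (subst sum.atLeastLessThan_concat[symmetric, of 0 "Suc n" L, simplified lessThan_atLeast0[symmetric]]) (auto simp: lessThan_atLeast0)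
  also have "(\<Sum>i\<in>{Suc n..<L}. ud (n div qq ^ i mod qq) * inverse pr ^ i) = 0"
    using z by (intro sum.neutral) simp
  finally show ?thesis unfolding u_pt_def by (simp add: lessThan_Suc_atMost)
qed

lemma uu_rec: "uu n = ud (n mod qq) + inverse pr * uu (n div qq)"
proof (cases "n = 0")
  case True thus ?thesis using uu0 ud0 by simp
next
  case False
  have lt: "n div qq < n" using False q2 by (intro div_less_dividend) simp_all
  have "uu n = (\<Sum>i<Suc n. ud (n div qq ^ i mod qq) * inverse pr ^ i)" by (rule uu_sum) simp
  also have "\<dots> = ud (n div qq ^ 0 mod qq) * inverse pr ^ 0 + (\<Sum>i<n. ud (n div qq ^ Suc i mod qq) * inverse pr ^ Suc i)"
    by (rule sum.lessThan_Suc_shift)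
  also have "(\<Sum>i<n. ud (n div qq ^ Suc i mod qq) * inverse pr ^ Suc i) =
      inverse pr * (\<Sum>i<n. ud (n div qq div qq ^ i mod qq) * inverse pr ^ i)"
    unfolding sum_distrib_left
  proof (rule sum.cong[OF refl])
    fix i
    have "n div qq ^ Suc i = n div qq div qq ^ i" unfolding power_Suc by (rule div_mult2_eq)
    thus "ud (n div qq ^ Suc i mod qq) * inverse pr ^ Suc i = inverse pr * (ud (n div qq div qq ^ i mod qq) * inverse pr ^ i)"
      by (simp add: algebra_simps)
  qed
  also have "(\<Sum>i<n. ud (n div qq div qq ^ i mod qq) * inverse pr ^ i) = uu (n div qq)"
    by (rule uu_sum[symmetric]) (rule lt)
  finally show ?thesis by simp
qed

lemma ud_add: assumes "a < qq" "b < qq" shows "\<exists>d<qq. ud a + ud b = ud d"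
proof -
  define g where "g j = (a div p ^ j mod p + b div p ^ j mod p) mod p" for j
  have gp: "\<forall>j<c. g j < p" unfolding g_def using p2 by simp
  define d where "d = (\<Sum>j<c. g j * p ^ j)"
  have D: "d < qq \<and> (\<forall>i<c. d div p ^ i mod p = g i)" unfolding d_def by (rule digits_sum[OF gp])
  have "ud a + ud b = (\<Sum>j<c. (of_nat (a div p ^ j mod p) + of_nat (b div p ^ j mod p)) * \<zeta> j) * inverse pr"
    unfolding u_digit_def by (simp add: algebra_simps sum.distrib)
  also have "\<dots> = (\<Sum>j<c. of_nat (d div p ^ j mod p) * \<zeta> j) * inverse pr"
  proof -
    have "(of_nat (a div p ^ j mod p) + of_nat (b div p ^ j mod p) :: 'k) = of_nat (d div p ^ j mod p)" if "j < c" for j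
    proof -
      have "(of_nat (a div p ^ j mod p) + of_nat (b div p ^ j mod p) :: 'k) = of_nat (a div p ^ j mod p + b div p ^ j mod p)"
        by simp
      also have "\<dots> = of_nat (g j)" unfolding g_def by (rule of_nat_modp)
      also have "g j = d div p ^ j mod p" using D that by simp
      finally show ?thesis .
    qed
    hence "(\<Sum>j<c. (of_nat (a div p ^ j mod p) + of_nat (b div p ^ j mod p)) * \<zeta> j) = (\<Sum>j<c. of_nat (d div p ^ j mod p) * \<zeta> j)"
      by (intro sum.cong refl) simp
    thus ?thesis by simp
  qed
  also have "\<dots> = ud d" unfolding u_digit_def ..
  finally show ?thesis using D by blast
qed

lemma uu_add: "\<exists>k. uu k = uu n + uu m"
proof (induction "n + m" arbitrary: n m rule: less_induct)
  case less
  show ?case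
  proof (cases "n = 0 \<and> m = 0")
    case True thus ?thesis using uu0 by (intro exI[of _ 0]) simp
  next
    case False
    have ln: "n div qq \<le> n" "m div qq \<le> m" by simp_all
    have "n div qq + m div qq < n + m"
    proof (cases "n = 0")
      case True
      hence "m \<noteq> 0" using False by simp
      hence "m div qq < m" using q2 by (intro div_less_dividend) simp_all
      thus ?thesis using ln by linarith
    next
      case False
      hence "n div qq < n" using q2 by (intro div_less_dividend) simp_all
      thus ?thesis using ln by linarith
    qed
    then obtain k' where k': "uu k' = uu (n div qq) + uu (m div qq)" using less by blast
    have "0 < qq" using q2 by linarith
    hence "n mod qq < qq" "m mod qq < qq" by simp_all
    then obtain d where d: "d < qq" "ud (n mod qq) + ud (m mod qq) = ud d" using ud_add by blast
    have "(d + qq * k') mod qq = d" using d by simp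
    moreover have "(d + qq * k') div qq = k'"
      using div_mult_self2[of qq d k'] div_less[OF d(1)] \<open>0 < qq\<close> by simp
    ultimately have "uu (d + qq * k') = ud d + inverse pr * uu k'" using uu_rec[of "d + qq * k'"] by simp
    also have "\<dots> = uu n + uu m" unfolding k' d(2)[symmetric] using uu_rec[of n] uu_rec[of m]
      by (simp add: algebra_simps)
    finally show ?thesis by blast
  qed
qed

lemma uu_neg: "\<exists>k. uu k = - uu n"
proof -
  have sm: "\<exists>k. uu k = of_nat i * uu n" for i
  proof (induction i)
    case 0 thus ?case using uu0 by (intro exI[of _ 0]) simp
  next
    case (Suc i)
    then obtain k where k: "uu k = of_nat i * uu n" by blast
    obtain k2 where "uu k2 = uu k + uu n" using uu_add by blast
    thus ?case using k by (intro exI[of _ k2]) (simp add: algebra_simps)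
  qed
  have "(of_nat (p - 1) :: 'k) + 1 = of_nat p" using p2 by (simp add: of_nat_diff)
  also have "(of_nat p :: 'k) = 0" using of_nat_CHAR[where 'a='k] charp by simp
  finally have "(of_nat (p - 1) :: 'k) = - 1" by (simp add: eq_neg_iff_add_eq_0)
  thus ?thesis using sm[of "p - 1"] by simp
qed

lemma uu_q: "uu (qq * k) = inverse pr * uu k"
proof -
  have "0 < qq" using q2 by linarith
  hence e1: "(qq * k) mod qq = 0" and e2: "(qq * k) div qq = k" by simp_all
  have "uu (qq * k) = ud ((qq * k) mod qq) + inverse pr * uu ((qq * k) div qq)" by (rule uu_rec)
  also have "\<dots> = inverse pr * uu k" unfolding e1 e2 ud0 by simp
  finally show ?thesis .
qed

lemma uu_comb: "\<exists>m. uu m = inverse pr * uu k + uu l - uu j"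
proof -
  obtain a where a: "uu a = - uu j" using uu_neg by blast
  obtain b where b: "uu b = uu (qq * k) + uu l" using uu_add by blast
  obtain m where m: "uu m = uu b + uu a" using uu_add by blast
  show ?thesis using a b m uu_q by (intro exI[of _ m]) simp
qed

end
end

context lfield begin

lemma trans_meas_comp': "h \<in> borel_measurable \<mu> \<Longrightarrow> (\<lambda>x. h (x - v)) \<in> borel_measurable \<mu>"
  using trans_meas_comp[of h "- v"] by simp

lemma L2_scale: assumes h: "L2 \<mu> h" shows "L2 \<mu> (\<lambda>x. h (inverse pr * x))"
proof -
  have m: "h \<in> borel_measurable \<mu>" using L2_meas[OF h] .
  have m2: "(\<lambda>x. h (inverse pr * x)) \<in> borel_measurable \<mu>" by (rule mul_meas_comp[OF m])
  have m3: "(\<lambda>y. (cmod (h y))\<^sup>2) \<in> borel_measurable \<mu>" using m by measurable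
  have "integrable \<mu> (\<lambda>x. (cmod (h (inverse pr * x)))\<^sup>2)"
    using scale_integrable[OF m3] L2_int[OF h] by simp
  thus ?thesis using m2 unfolding L2_def by simp
qed

lemma L2_aff: assumes h: "L2 \<mu> h" shows "L2 \<mu> (\<lambda>x. h (inverse pr * x - v))"
  using L2_scale[OF L2_trans[OF h, of v]] by simp

context fixes \<zeta> :: "nat \<Rightarrow> 'k" begin

definition GC :: "('k \<Rightarrow> complex) \<Rightarrow> ('k \<Rightarrow> complex) \<Rightarrow> bool" where
  "GC g gt \<longleftrightarrow> (\<forall>m. l2_inner \<mu> g (\<lambda>x. gt (x - uu \<zeta> m)) = (if m = 0 then 1 else 0))"

definition cN :: "(nat \<Rightarrow> complex) \<Rightarrow> (nat \<Rightarrow> complex) \<Rightarrow> nat \<Rightarrow> nat \<Rightarrow> complex" where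
  "cN a1 a2 k N = (\<Sum>j<N. \<Sum>l<N. a1 j * cnj (a2 l) *
      (if uu \<zeta> j = inverse pr * uu \<zeta> k + uu \<zeta> l then 1 else 0))"

lemma uu_inj0: assumes "GC g gt" "uu \<zeta> m = 0" shows "m = 0"
proof (rule ccontr)
  assume "m \<noteq> 0"
  hence "l2_inner \<mu> g (\<lambda>x. gt (x - uu \<zeta> m)) = 0" using assms(1) unfolding GC_def by simp
  moreover have "l2_inner \<mu> g (\<lambda>x. gt (x - uu \<zeta> 0)) = 1" using assms(1) unfolding GC_def by simp
  ultimately show False using assms(2) uu0 by simp
qed

lemma term_val:
  assumes g: "L2 \<mu> g" and gt: "L2 \<mu> gt" and gc: "GC g gt"
  shows "(\<integral>x. g (inverse pr * x - uu \<zeta> j) * cnj (gt (inverse pr * x - (inverse pr * uu \<zeta> k + uu \<zeta> l))) \<partial>\<mu>)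
     = complex_of_real (1 / real qq) * (if uu \<zeta> j = inverse pr * uu \<zeta> k + uu \<zeta> l then 1 else 0)"
proof -
  define w where "w = inverse pr * uu \<zeta> k + uu \<zeta> l"
  obtain m where m: "uu \<zeta> m = inverse pr * uu \<zeta> k + uu \<zeta> l - uu \<zeta> j" using uu_comb by blast
  have mg[measurable]: "g \<in> borel_measurable \<mu>" and mgt[measurable]: "gt \<in> borel_measurable \<mu>"
    using L2_meas g gt by auto
  define \<Psi> where "\<Psi> z = g z * cnj (gt (z - uu \<zeta> m))" for z
  have m1: "(\<lambda>x. gt (x - uu \<zeta> m)) \<in> borel_measurable \<mu>" by (rule trans_meas_comp'[OF mgt])
  have mP: "\<Psi> \<in> borel_measurable \<mu>" unfolding \<Psi>_def using m1 by measurable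
  define \<Phi> where "\<Phi> y = \<Psi> (y + - uu \<zeta> j)" for y
  have mF: "\<Phi> \<in> borel_measurable \<mu>" unfolding \<Phi>_def by (rule trans_meas_comp[OF mP])
  have PhiE: "\<Phi> y = g (y - uu \<zeta> j) * cnj (gt (y - w))" for y
  proof -
    have e: "y + - uu \<zeta> j - uu \<zeta> m = y - w" unfolding w_def m by (simp add: algebra_simps)
    show ?thesis unfolding \<Phi>_def \<Psi>_def e by simp
  qed
  have "(\<integral>x. g (inverse pr * x - uu \<zeta> j) * cnj (gt (inverse pr * x - w)) \<partial>\<mu>) = (\<integral>x. \<Phi> (inverse pr * x) \<partial>\<mu>)"
    unfolding PhiE ..
  also have "\<dots> = (1 / real qq) *\<^sub>R integral\<^sup>L \<mu> \<Phi>" by (rule scale_integral[OF mF])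
  also have "integral\<^sup>L \<mu> \<Phi> = integral\<^sup>L \<mu> \<Psi>" unfolding \<Phi>_def by (rule trans_integral[OF mP])
  also have "integral\<^sup>L \<mu> \<Psi> = l2_inner \<mu> g (\<lambda>x. gt (x - uu \<zeta> m))" unfolding \<Psi>_def l2_inner_def ..
  also have "\<dots> = (if m = 0 then 1 else 0)" using gc unfolding GC_def by blast
  also have "(m = 0) \<longleftrightarrow> (uu \<zeta> j = w)"
  proof
    assume "m = 0" thus "uu \<zeta> j = w" using m uu0 unfolding w_def by simp
  next
    assume "uu \<zeta> j = w" hence "uu \<zeta> m = 0" using m unfolding w_def by simp
    thus "m = 0" using uu_inj0[OF gc] by blast
  qed
  finally show ?thesis unfolding w_def by (simp add: scaleR_conv_of_real)
qed

lemma LEM: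
  assumes g: "L2 \<mu> g" and gt: "L2 \<mu> gt" and gc: "GC g gt"
    and Rf: "refinement_eq \<mu> qq pr (uu \<zeta>) f a1 g"
    and Rft: "refinement_eq \<mu> qq pr (uu \<zeta>) ft a2 gt"
  shows "cN a1 a2 k \<longlonglongrightarrow> l2_inner \<mu> f (\<lambda>x. ft (x - uu \<zeta> k))"
proof -
  define sq where "sq = complex_of_real (sqrt (real qq))"
  define S where "S N x = sq * (\<Sum>j<N. a1 j * g (inverse pr * x - uu \<zeta> j))" for N x
  define R where "R N x = sq * (\<Sum>l<N. a2 l * gt (inverse pr * x - uu \<zeta> l))" for N x
  have LS: "L2_limit \<mu> S f" using Rf unfolding refinement_eq_def S_def sq_def .
  have LR: "L2_limit \<mu> R ft" using Rft unfolding refinement_eq_def R_def sq_def .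
  have LR': "L2_limit \<mu> (\<lambda>N x. R N (x - uu \<zeta> k)) (\<lambda>x. ft (x - uu \<zeta> k))" by (rule L2_limit_trans[OF LR])
  have lim: "(\<lambda>N. l2_inner \<mu> (S N) (\<lambda>x. R N (x - uu \<zeta> k))) \<longlonglongrightarrow> l2_inner \<mu> f (\<lambda>x. ft (x - uu \<zeta> k))"
    by (rule L2_limit_inner[OF LS LR'])
  define G where "G j x = g (inverse pr * x - uu \<zeta> j)" for j x
  define H where "H l x = gt (inverse pr * x - (inverse pr * uu \<zeta> k + uu \<zeta> l))" for l x
  have LG: "L2 \<mu> (G j)" for j unfolding G_def by (rule L2_aff[OF g])
  have LH: "L2 \<mu> (H l)" for l unfolding H_def by (rule L2_aff[OF gt])
  have iGH: "integrable \<mu> (\<lambda>x. G j x * cnj (H l x))" for j l by (rule L2_prod[OF LG LH])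
  have sqsq: "sq * cnj sq = complex_of_real (real qq)"
    unfolding sq_def by (simp add: of_real_mult[symmetric] del: of_real_mult)
  have eq: "l2_inner \<mu> (S N) (\<lambda>x. R N (x - uu \<zeta> k)) = cN a1 a2 k N" for N
  proof -
    have pw: "S N x * cnj (R N (x - uu \<zeta> k)) =
       (\<Sum>j<N. \<Sum>l<N. (complex_of_real (real qq) * (a1 j * cnj (a2 l))) * (G j x * cnj (H l x)))" for x
    proof -
      have Hx: "gt (inverse pr * (x - uu \<zeta> k) - uu \<zeta> l) = H l x" for l
      proof -
        have e: "inverse pr * (x - uu \<zeta> k) - uu \<zeta> l = inverse pr * x - (inverse pr * uu \<zeta> k + uu \<zeta> l)"
          by (simp add: algebra_simps)
        show ?thesis unfolding H_def e ..
      qed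
      have "S N x * cnj (R N (x - uu \<zeta> k)) = (sq * cnj sq) * ((\<Sum>j<N. a1 j * G j x) * cnj (\<Sum>l<N. a2 l * H l x))"
        unfolding S_def R_def G_def Hx by (simp add: algebra_simps)
      also have "cnj (\<Sum>l<N. a2 l * H l x) = (\<Sum>l<N. cnj (a2 l) * cnj (H l x))" by simp
      also have "(\<Sum>j<N. a1 j * G j x) * (\<Sum>l<N. cnj (a2 l) * cnj (H l x)) =
          (\<Sum>j<N. \<Sum>l<N. (a1 j * G j x) * (cnj (a2 l) * cnj (H l x)))" by (rule sum_product)
      finally show ?thesis unfolding sqsq by (simp add: sum_distrib_left algebra_simps)
    qed
    have "l2_inner \<mu> (S N) (\<lambda>x. R N (x - uu \<zeta> k)) =
        (\<integral>x. (\<Sum>j<N. \<Sum>l<N. (complex_of_real (real qq) * (a1 j * cnj (a2 l))) * (G j x * cnj (H l x))) \<partial>\<mu>)"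
      unfolding l2_inner_def pw ..
    also have "\<dots> = (\<Sum>j<N. \<integral>x. (\<Sum>l<N. (complex_of_real (real qq) * (a1 j * cnj (a2 l))) * (G j x * cnj (H l x))) \<partial>\<mu>)"
      by (rule Bochner_Integration.integral_sum[where I="{..<N}" and f="\<lambda>j x. \<Sum>l<N. (complex_of_real (real qq) * (a1 j * cnj (a2 l))) * (G j x * cnj (H l x))"])
        (intro Bochner_Integration.integrable_sum integrable_mult_right iGH)
    also have "\<dots> = (\<Sum>j<N. \<Sum>l<N. (complex_of_real (real qq) * (a1 j * cnj (a2 l))) * (\<integral>x. G j x * cnj (H l x) \<partial>\<mu>))"
    proof (rule sum.cong[OF refl])
      fix j
      have "(\<integral>x. (\<Sum>l<N. (complex_of_real (real qq) * (a1 j * cnj (a2 l))) * (G j x * cnj (H l x))) \<partial>\<mu>) =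
         (\<Sum>l<N. \<integral>x. (complex_of_real (real qq) * (a1 j * cnj (a2 l))) * (G j x * cnj (H l x)) \<partial>\<mu>)"
        by (rule Bochner_Integration.integral_sum[where I="{..<N}" and f="\<lambda>l x. (complex_of_real (real qq) * (a1 j * cnj (a2 l))) * (G j x * cnj (H l x))"])
          (intro integrable_mult_right iGH)
      thus "(\<integral>x. (\<Sum>l<N. (complex_of_real (real qq) * (a1 j * cnj (a2 l))) * (G j x * cnj (H l x))) \<partial>\<mu>) =
         (\<Sum>l<N. (complex_of_real (real qq) * (a1 j * cnj (a2 l))) * (\<integral>x. G j x * cnj (H l x) \<partial>\<mu>))"
        by simp
    qed
    also have "\<dots> = cN a1 a2 k N"
      unfolding cN_def
    proof (intro sum.cong refl)
      fix j l
      have tv: "(\<integral>x. G j x * cnj (H l x) \<partial>\<mu>) = complex_of_real (1 / real qq) *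
          (if uu \<zeta> j = inverse pr * uu \<zeta> k + uu \<zeta> l then 1 else 0)"
        unfolding G_def H_def by (rule term_val[OF g gt gc])
      have qq1: "complex_of_real (real qq) * complex_of_real (1 / real qq) = 1"
        using qpos by (simp add: of_real_mult[symmetric] del: of_real_mult)
      show "complex_of_real (real qq) * (a1 j * cnj (a2 l)) * (\<integral>x. G j x * cnj (H l x) \<partial>\<mu>) =
          a1 j * cnj (a2 l) * (if uu \<zeta> j = inverse pr * uu \<zeta> k + uu \<zeta> l then 1 else 0)"
      proof -
        define I where "I = (if uu \<zeta> j = inverse pr * uu \<zeta> k + uu \<zeta> l then 1 else (0::complex))"
        have "complex_of_real (real qq) * (a1 j * cnj (a2 l)) * (complex_of_real (1 / real qq) * I) =
          (complex_of_real (real qq) * complex_of_real (1 / real qq)) * (a1 j * cnj (a2 l) * I)"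
          by (simp only: mult_ac)
        thus ?thesis unfolding tv I_def[symmetric] qq1 by simp
      qed
    qed
    finally show ?thesis .
  qed
  show ?thesis using lim unfolding eq .
qed

end
end

context lfield begin

lemma inner_swap: assumes f: "L2 \<mu> f" and g: "L2 \<mu> g"
  shows "l2_inner \<mu> f (\<lambda>x. g (x - v)) = cnj (l2_inner \<mu> g (\<lambda>x. f (x + v)))"
proof -
  have mf[measurable]: "f \<in> borel_measurable \<mu>" and mg[measurable]: "g \<in> borel_measurable \<mu>"
    using L2_meas f g by auto
  have m1: "(\<lambda>x. g (x - v)) \<in> borel_measurable \<mu>" by (rule trans_meas_comp'[OF mg])
  define h where "h x = f x * cnj (g (x - v))" for x
  have mh: "h \<in> borel_measurable \<mu>" unfolding h_def using m1 by measurable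
  have "(\<integral>x. h (x + v) \<partial>\<mu>) = integral\<^sup>L \<mu> h" by (rule trans_integral[OF mh])
  moreover have "(\<lambda>x. h (x + v)) = (\<lambda>x. cnj (g x * cnj (f (x + v))))" unfolding h_def by (rule ext) simp
  ultimately have "integral\<^sup>L \<mu> h = (\<integral>x. cnj (g x * cnj (f (x + v))) \<partial>\<mu>)" by simp
  also have "\<dots> = cnj (\<integral>x. g x * cnj (f (x + v)) \<partial>\<mu>)" by (rule Bochner_Integration.integral_cnj)
  finally show ?thesis unfolding l2_inner_def h_def .
qed

context fixes \<zeta> :: "nat \<Rightarrow> 'k" begin

lemma main:
  fixes a a_t :: "nat \<Rightarrow> nat \<Rightarrow> complex"
    and \<phi> \<phi>t :: "'k \<Rightarrow> complex" and \<psi> \<psi>t :: "nat \<Rightarrow> 'k \<Rightarrow> complex"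
    and \<omega> \<omega>t :: "nat \<Rightarrow> 'k \<Rightarrow> complex"
  assumes L2_fun: "L2 \<mu> \<phi> \<and> L2 \<mu> \<phi>t \<and> (\<forall>l. 1 \<le> l \<and> l \<le> qq - 1 \<longrightarrow> L2 \<mu> (\<psi> l) \<and> L2 \<mu> (\<psi>t l))"
    and refine_phi: "refinement_eq \<mu> qq pr (uu \<zeta>) \<phi> (a 0) \<phi>"
    and refine_phit: "refinement_eq \<mu> qq pr (uu \<zeta>) \<phi>t (a_t 0) \<phi>t"
    and refine_psi: "\<forall>l. 1 \<le> l \<and> l \<le> qq - 1 \<longrightarrow>
                        refinement_eq \<mu> qq pr (uu \<zeta>) (\<psi> l) (a l) \<phi> \<and>
                        refinement_eq \<mu> qq pr (uu \<zeta>) (\<psi>t l) (a_t l) \<phi>t"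
    and biorth1: "\<forall>k. l2_inner \<mu> \<phi> (\<lambda>x. \<phi>t (x - uu \<zeta> k)) = (if k = 0 then 1 else 0)"
    and biorth2: "\<forall>k l. 1 \<le> l \<and> l \<le> qq - 1 \<longrightarrow> l2_inner \<mu> \<phi> (\<lambda>x. \<psi>t l (x - uu \<zeta> k)) = 0"
    and biorth3: "\<forall>k l. 1 \<le> l \<and> l \<le> qq - 1 \<longrightarrow> l2_inner \<mu> \<phi>t (\<lambda>x. \<psi> l (x - uu \<zeta> k)) = 0"
    and biorth4: "\<forall>k l l'. 1 \<le> l \<and> l \<le> qq - 1 \<and> 1 \<le> l' \<and> l' \<le> qq - 1 \<longrightarrow>
                    l2_inner \<mu> (\<psi> l) (\<lambda>x. \<psi>t l' (x - uu \<zeta> k)) = (if l = l' \<and> k = 0 then 1 else 0)"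
    and omega0: "\<omega> 0 = \<phi>" and omegat0: "\<omega>t 0 = \<phi>t"
    and omega_rec: "\<forall>r s. s \<le> qq - 1 \<longrightarrow> refinement_eq \<mu> qq pr (uu \<zeta>) (\<omega> (qq * r + s)) (a s) (\<omega> r)"
    and omegat_rec: "\<forall>r s. s \<le> qq - 1 \<longrightarrow> refinement_eq \<mu> qq pr (uu \<zeta>) (\<omega>t (qq * r + s)) (a_t s) (\<omega>t r)"
  shows "\<forall>s1 s2 r k. s1 \<le> qq - 1 \<and> s2 \<le> qq - 1 \<longrightarrow>
           l2_inner \<mu> (\<omega> (qq * r + s1)) (\<lambda>x. \<omega>t (qq * r + s2) (x - uu \<zeta> k)) =
             (if k = 0 \<and> s1 = s2 then 1 else 0)"
proof -
  have Lp: "L2 \<mu> \<phi>" and Lpt: "L2 \<mu> \<phi>t" using L2_fun by auto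
  have gc0: "GC \<zeta> \<phi> \<phi>t" unfolding GC_def using biorth1 by blast
  define F where "F s = (if s = 0 then \<phi> else \<psi> s)" for s
  define Ft where "Ft s = (if s = 0 then \<phi>t else \<psi>t s)" for s
  have RF: "refinement_eq \<mu> qq pr (uu \<zeta>) (F s) (a s) \<phi>" if "s \<le> qq - 1" for s
    using refine_phi refine_psi that unfolding F_def by (cases "s = 0") auto
  have RFt: "refinement_eq \<mu> qq pr (uu \<zeta>) (Ft s) (a_t s) \<phi>t" if "s \<le> qq - 1" for s
    using refine_phit refine_psi that unfolding Ft_def by (cases "s = 0") auto
  have hv: "l2_inner \<mu> (F s1) (\<lambda>x. Ft s2 (x - uu \<zeta> k)) = (if k = 0 \<and> s1 = s2 then 1 else 0)"
    if s1: "s1 \<le> qq - 1" and s2: "s2 \<le> qq - 1" for s1 s2 k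
  proof (cases "s1 = 0")
    case True
    show ?thesis
    proof (cases "s2 = 0")
      case True
      thus ?thesis using \<open>s1 = 0\<close> biorth1 unfolding F_def Ft_def by simp
    next
      case False
      hence "1 \<le> s2" by simp
      thus ?thesis using \<open>s1 = 0\<close> False biorth2 s2 unfolding F_def Ft_def by simp
    qed
  next
    case False
    hence s11: "1 \<le> s1" by simp
    show ?thesis
    proof (cases "s2 = 0")
      case True
      have Lps: "L2 \<mu> (\<psi> s1)" using L2_fun s1 s11 by blast
      obtain k' where k': "uu \<zeta> k' = - uu \<zeta> k" using uu_neg by blast
      have "l2_inner \<mu> (\<psi> s1) (\<lambda>x. \<phi>t (x - uu \<zeta> k)) = cnj (l2_inner \<mu> \<phi>t (\<lambda>x. \<psi> s1 (x + uu \<zeta> k)))"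
        by (rule inner_swap[OF Lps Lpt])
      also have "(\<lambda>x. \<psi> s1 (x + uu \<zeta> k)) = (\<lambda>x. \<psi> s1 (x - uu \<zeta> k'))" using k' by simp
      also have "l2_inner \<mu> \<phi>t (\<lambda>x. \<psi> s1 (x - uu \<zeta> k')) = 0" using biorth3 s1 s11 by blast
      finally show ?thesis using True False unfolding F_def Ft_def by simp
    next
      case False
      hence "1 \<le> s2" by simp
      hence "l2_inner \<mu> (\<psi> s1) (\<lambda>x. \<psi>t s2 (x - uu \<zeta> k)) = (if s1 = s2 \<and> k = 0 then 1 else 0)"
        using biorth4 s1 s2 s11 by blast
      thus ?thesis using False \<open>s1 \<noteq> 0\<close> unfolding F_def Ft_def by auto
    qed
  qed
  have A: "cN \<zeta> (a s1) (a_t s2) k \<longlonglongrightarrow> (if k = 0 \<and> s1 = s2 then 1 else 0)"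
    if s1: "s1 \<le> qq - 1" and s2: "s2 \<le> qq - 1" for s1 s2 k
    using LEM[OF Lp Lpt gc0 RF[OF s1] RFt[OF s2], of k] hv[OF s1 s2, of k] by simp
  have step: "l2_inner \<mu> (\<omega> (qq * r + s1)) (\<lambda>x. \<omega>t (qq * r + s2) (x - uu \<zeta> k)) = (if k = 0 \<and> s1 = s2 then 1 else 0)"
    if L: "L2 \<mu> (\<omega> r)" "L2 \<mu> (\<omega>t r)" and G: "GC \<zeta> (\<omega> r) (\<omega>t r)" and s1: "s1 \<le> qq - 1" and s2: "s2 \<le> qq - 1"
    for r s1 s2 k
  proof -
    have R1: "refinement_eq \<mu> qq pr (uu \<zeta>) (\<omega> (qq * r + s1)) (a s1) (\<omega> r)" using omega_rec s1 by blast
    have R2: "refinement_eq \<mu> qq pr (uu \<zeta>) (\<omega>t (qq * r + s2)) (a_t s2) (\<omega>t r)" using omegat_rec s2 by blast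
    show ?thesis using LIMSEQ_unique[OF LEM[OF L G R1 R2, of k] A[OF s1 s2, of k]] .
  qed
  have q0: "0 < qq" using q2 by linarith
  have dm: "n = qq * (n div qq) + n mod qq" for n by simp
  have mq: "n mod qq \<le> qq - 1" for n using q0 by (simp add: less_Suc_eq_le[symmetric])
  have Lw: "L2 \<mu> (\<omega> n) \<and> L2 \<mu> (\<omega>t n)" for n
  proof -
    have "refinement_eq \<mu> qq pr (uu \<zeta>) (\<omega> (qq * (n div qq) + n mod qq)) (a (n mod qq)) (\<omega> (n div qq))"
      using omega_rec mq by blast
    hence a1: "L2 \<mu> (\<omega> n)" using dm[of n] unfolding refinement_eq_def L2_limit_def by metis
    have "refinement_eq \<mu> qq pr (uu \<zeta>) (\<omega>t (qq * (n div qq) + n mod qq)) (a_t (n mod qq)) (\<omega>t (n div qq))"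
      using omegat_rec mq by blast
    hence a2: "L2 \<mu> (\<omega>t n)" using dm[of n] unfolding refinement_eq_def L2_limit_def by metis
    show ?thesis using a1 a2 by blast
  qed
  have Gw: "GC \<zeta> (\<omega> n) (\<omega>t n)" for n
  proof (induction n rule: less_induct)
    case (less n)
    show ?case
    proof (cases "n = 0")
      case True thus ?thesis using gc0 omega0 omegat0 by simp
    next
      case False
      have lt: "n div qq < n" using False q2 by (intro div_less_dividend) simp_all
      have G: "GC \<zeta> (\<omega> (n div qq)) (\<omega>t (n div qq))" by (rule less.IH[OF lt])
      have "l2_inner \<mu> (\<omega> (qq * (n div qq) + n mod qq)) (\<lambda>x. \<omega>t (qq * (n div qq) + n mod qq) (x - uu \<zeta> m))
          = (if m = 0 \<and> n mod qq = n mod qq then 1 else 0)" for m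
        using step[OF _ _ G mq mq] Lw by blast
      hence "l2_inner \<mu> (\<omega> n) (\<lambda>x. \<omega>t n (x - uu \<zeta> m)) = (if m = 0 then 1 else 0)" for m
        using dm[of n] by simp
      thus ?thesis unfolding GC_def by blast
    qed
  qed
  show ?thesis using step Lw Gw by blast
qed

end
end

theorem theorem3p3:
  fixes absv :: "'k::field \<Rightarrow> real" and \<mu> :: "'k measure"
    and p c :: nat and pr :: 'k and \<zeta> :: "nat \<Rightarrow> 'k"
    and a a_t :: "nat \<Rightarrow> nat \<Rightarrow> complex"
    and \<phi> \<phi>t :: "'k \<Rightarrow> complex" and \<psi> \<psi>t :: "nat \<Rightarrow> 'k \<Rightarrow> complex"
    and \<omega> \<omega>t :: "nat \<Rightarrow> 'k \<Rightarrow> complex"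
  defines "q \<equiv> p ^ c"
  defines "u \<equiv> u_pt p c \<zeta> pr"
  assumes K: "local_field_pc absv \<mu> p c pr"
    and zeta: "residue_basis absv p c \<zeta>"
    and coeff_l2: "\<forall>s<q. summable (\<lambda>k. (cmod (a s k))\<^sup>2) \<and> summable (\<lambda>k. (cmod (a_t s k))\<^sup>2)"
    and L2_fun: "L2 \<mu> \<phi> \<and> L2 \<mu> \<phi>t \<and> (\<forall>l. 1 \<le> l \<and> l \<le> q - 1 \<longrightarrow> L2 \<mu> (\<psi> l) \<and> L2 \<mu> (\<psi>t l))"
    and refine_phi: "refinement_eq \<mu> q pr u \<phi> (a 0) \<phi>"
    and refine_phit: "refinement_eq \<mu> q pr u \<phi>t (a_t 0) \<phi>t"
    and refine_psi: "\<forall>l. 1 \<le> l \<and> l \<le> q - 1 \<longrightarrow>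
                        refinement_eq \<mu> q pr u (\<psi> l) (a l) \<phi> \<and>
                        refinement_eq \<mu> q pr u (\<psi>t l) (a_t l) \<phi>t"
    and MRA_phi: "\<exists>V. MRA \<mu> pr u V \<phi> \<and>
                    (\<exists>W. closed_subspace \<mu> W \<and>
                         V 0 \<inter> W = {f. L2 \<mu> f \<and> (AE x in \<mu>. f x = 0)} \<and>
                         V 1 = {(\<lambda>x. g x + h x) | g h. g \<in> V 0 \<and> h \<in> W} \<and>
                         riesz_basis \<mu> ({1..q - 1} \<times> UNIV) (\<lambda>(l, k) x. \<psi> l (x - u k)) W)"
    and MRA_phit: "\<exists>V. MRA \<mu> pr u V \<phi>t"
    and biorth1: "\<forall>k. l2_inner \<mu> \<phi> (\<lambda>x. \<phi>t (x - u k)) = (if k = 0 then 1 else 0)"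
    and biorth2: "\<forall>k l. 1 \<le> l \<and> l \<le> q - 1 \<longrightarrow> l2_inner \<mu> \<phi> (\<lambda>x. \<psi>t l (x - u k)) = 0"
    and biorth3: "\<forall>k l. 1 \<le> l \<and> l \<le> q - 1 \<longrightarrow> l2_inner \<mu> \<phi>t (\<lambda>x. \<psi> l (x - u k)) = 0"
    and biorth4: "\<forall>k l l'. 1 \<le> l \<and> l \<le> q - 1 \<and> 1 \<le> l' \<and> l' \<le> q - 1 \<longrightarrow>
                    l2_inner \<mu> (\<psi> l) (\<lambda>x. \<psi>t l' (x - u k)) = (if l = l' \<and> k = 0 then 1 else 0)"
    and omega0: "\<omega> 0 = \<phi>" and omegat0: "\<omega>t 0 = \<phi>t"
    and omega_rec: "\<forall>r s. s \<le> q - 1 \<longrightarrow> refinement_eq \<mu> q pr u (\<omega> (q * r + s)) (a s) (\<omega> r)"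
    and omegat_rec: "\<forall>r s. s \<le> q - 1 \<longrightarrow> refinement_eq \<mu> q pr u (\<omega>t (q * r + s)) (a_t s) (\<omega>t r)"
  shows "\<forall>s1 s2 r k. s1 \<le> q - 1 \<and> s2 \<le> q - 1 \<longrightarrow>
           l2_inner \<mu> (\<omega> (q * r + s1)) (\<lambda>x. \<omega>t (q * r + s2) (x - u k)) =
             (if k = 0 \<and> s1 = s2 then 1 else 0)"
proof -
  interpret L: lfield absv \<mu> p c pr by (rule lfield.intro[OF K])
  show ?thesis unfolding q_def u_def
    by (rule L.main[OF L2_fun[unfolded q_def] refine_phi[unfolded q_def u_def] refine_phit[unfolded q_def u_def]
        refine_psi[unfolded q_def u_def] biorth1[unfolded u_def] biorth2[unfolded q_def u_def]
        biorth3[unfolded q_def u_def] biorth4[unfolded q_def u_def] omega0 omegat0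
        omega_rec[unfolded q_def u_def] omegat_rec[unfolded q_def u_def]])
qed


end
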